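(* Suppose Assumption 1 holds and every $d^k$ satisfies the $\eta$-inexactness condition for a fixed $\eta\in[0,1)$ ($f$ need not be convex). For $t\ge0$ let $G_t\coloneqq\arg\min_dQ^{x^t}_I(d)$ (the minimizer with $H=I$). For Algorithm 1, if $\sigma I\preceq H_k\preceq MI$ for all $k$ with $M\ge\sigma>0$, then for all $k\ge0$ $$\min_{0\le t\le k}\|G_t\|^2\le\frac{F(x^0)-F^*}{\gamma(k+1)}\cdot\frac{M^2\left(1+\frac1\sigma+\sqrt{1-\frac2M+\frac1{\sigma^2}}\right)^2}{2(1-\eta)\sigma\min_{0\le t\le k}\alpha_t}$$ $$\le\frac{F(x^0)-F^*}{\gamma(k+1)}\cdot\frac{M^2\left(1+\frac1\sigma+\sqrt{1-\frac2M+\frac1{\sigma^2}}\right)^2}{2\sigma}\max\left\{\frac1{1-\eta},\ \frac{L}{2(1-\sqrt\eta)(1-\gamma)\sigma\beta}\right\}.$$ For Algorithm 2, if the initial matrices satisfy $m_0I\preceq H^0_k\preceq M_0I$ with $M_0\ge m_0>0$ for all $k$, then for Variant 1 $$\min_{0\le t\le k}\|G_t\|^2\le\frac{F(x^0)-F^*}{\gamma(k+1)}\cdot\frac{\tilde M_1(\eta)^2\left(1+\frac1{m_0}+\sqrt{1-\frac2{\tilde M_1(\eta)}+\frac1{m_0^2}}\right)^2}{2(1-\eta)m_0},$$ and for Variant 2 the same bound holds with $\tilde M_1(\eta)$ replaced by $\tilde M_2(\eta)$.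
   Context: Problem setting: $F(x)=f(x)+\psi(x)$ on $\mathbb{R}^n$, $F^*=\inf F$. Assumption 1: $f$ is differentiable with $L$-Lipschitz continuous gradient ($L>0$); $\psi:\mathbb{R}^n\to\mathbb{R}\cup\{+\infty\}$ is convex, proper and closed; $F$ is bounded below; the solution set $\Omega=\{x:F(x)=F^*\}$ is nonempty. For $x\in\mathbb{R}^n$ and symmetric $H$, $Q^x_H(d)\coloneqq\nabla f(x)^Td+\frac12d^THd+\psi(x+d)-\psi(x)$, $Q^*=\inf_dQ^x_H(d)$; $d$ satisfies the $\eta$-inexactness condition if $Q^x_H(d)\le(1-\eta)Q^*$. Algorithm 1: given $\beta,\gamma\in(0,1)$, $x^0$, fixed $\eta\in[0,1)$; for $k=0,1,\dots$: choose symmetric $H_k$ with $Q_k\coloneqq Q^{x^k}_{H_k}$ strongly convex; compute $d^k$ satisfying the $\eta$-inexactness condition for $Q_k$; let $\Delta_k=\nabla f(x^k)^Td^k+\psi(x^k+d^k)-\psi(x^k)$; let $\alpha_k=\beta^i$ for the smallest nonnegative integer $i$ with $F(x^k+\alpha_kd^k)\le F(x^k)+\alpha_k\gamma\Delta_k$; set $x^{k+1}=x^k+\alpha_kd^k$. Algorithm 2: given $\beta\in(0,1)$, $\gamma\in(0,1]$, $x^0$, fixed $\eta\in[0,1)$; for each $k$: choose symmetric $H^0_k$ (in Variant 1, $H^0_k\succ0$); set $\alpha_k\leftarrow1$, $H_k\leftarrow H^0_k$, compute $d^k$ satisfying the $\eta$-inexactness condition for $Q^{x^k}_{H_k}$;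 while $F(x^k)-F(x^k+d^k)\ge-\gamma Q^{x^k}_{H_k}(d^k)\ge0$ fails: Variant 1 sets $\alpha_k\leftarrow\beta\alpha_k$, $H_k\leftarrow H^0_k/\alpha_k$; Variant 2 sets $H_k\leftarrow H^0_k+\alpha_k^{-1}I$, then $\alpha_k\leftarrow\beta\alpha_k$; then $d^k$ is recomputed satisfying the $\eta$-inexactness condition. Finally $x^{k+1}=x^k+d^k$; "final $H_k$" is the accepted matrix. Constants: $\tilde M_2(\eta)\coloneqq M_0+\max\{1,\frac1\beta(\frac{L(1+\sqrt\eta)}{2-\gamma(1-\sqrt\eta)}-m_0)\}$, $\tilde M_1(\eta)\coloneqq M_0\max\{1,\frac{L(1+\sqrt\eta)}{\beta(2-\gamma(1-\sqrt\eta))m_0}\}$. *)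

theory Defs
  imports "HOL-Analysis.Analysis"
begin

definition ext_convex :: "('a::real_vector \<Rightarrow> ereal) \<Rightarrow> bool" where
  "ext_convex g \<longleftrightarrow> (\<forall>x y t. 0 \<le> t \<and> t \<le> 1 \<longrightarrow>
      g ((1 - t) *\<^sub>R x + t *\<^sub>R y) \<le> ereal (1 - t) * g x + ereal t * g y)"

definition ext_proper :: "('a \<Rightarrow> ereal) \<Rightarrow> bool" where
  "ext_proper g \<longleftrightarrow> (\<forall>x. g x \<noteq> -\<infinity>) \<and> (\<exists>x. g x \<noteq> \<infinity>)"

definition ext_closed :: "('a::topological_space \<Rightarrow> ereal) \<Rightarrow> bool" where
  "ext_closed g \<longleftrightarrow> closed {(x, a::real). g x \<le> ereal a}"

definition Fobj :: "('a \<Rightarrow> real) \<Rightarrow> ('a \<Rightarrow> ereal) \<Rightarrow> 'a \<Rightarrow> ereal" where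
  "Fobj f psi x = ereal (f x) + psi x"

definition Fstar :: "('a \<Rightarrow> real) \<Rightarrow> ('a \<Rightarrow> ereal) \<Rightarrow> ereal" where
  "Fstar f psi = (INF x. Fobj f psi x)"

definition assumption1 :: "(real^'n \<Rightarrow> real) \<Rightarrow> (real^'n \<Rightarrow> real^'n) \<Rightarrow> real
    \<Rightarrow> (real^'n \<Rightarrow> ereal) \<Rightarrow> bool" where
  "assumption1 f gradf L psi \<longleftrightarrow>
     (\<forall>x. (f has_derivative (\<lambda>d. gradf x \<bullet> d)) (at x)) \<and>
     L > 0 \<and> (\<forall>x y. norm (gradf x - gradf y) \<le> L * norm (x - y)) \<and>
     ext_convex psi \<and> ext_proper psi \<and> ext_closed psi \<and>
     (\<exists>c. \<forall>x. ereal c \<le> Fobj f psi x) \<and>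
     (\<exists>x. Fobj f psi x = Fstar f psi)"

definition Qm :: "(real^'n \<Rightarrow> real^'n) \<Rightarrow> (real^'n \<Rightarrow> ereal) \<Rightarrow> real^'n \<Rightarrow> real^'n^'n
    \<Rightarrow> real^'n \<Rightarrow> ereal" where
  "Qm gradf psi x H d = ereal (gradf x \<bullet> d + 1/2 * (d \<bullet> (H *v d))) + psi (x + d) - psi x"

definition Qstar :: "(real^'n \<Rightarrow> real^'n) \<Rightarrow> (real^'n \<Rightarrow> ereal) \<Rightarrow> real^'n \<Rightarrow> real^'n^'n \<Rightarrow> ereal" where
  "Qstar gradf psi x H = (INF d. Qm gradf psi x H d)"

definition inexact :: "real \<Rightarrow> (real^'n \<Rightarrow> real^'n) \<Rightarrow> (real^'n \<Rightarrow> ereal) \<Rightarrow> real^'n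
    \<Rightarrow> real^'n^'n \<Rightarrow> real^'n \<Rightarrow> bool" where
  "inexact \<eta> gradf psi x H d \<longleftrightarrow> Qm gradf psi x H d \<le> ereal (1 - \<eta>) * Qstar gradf psi x H"

definition Gmap :: "(real^'n \<Rightarrow> real^'n) \<Rightarrow> (real^'n \<Rightarrow> ereal) \<Rightarrow> real^'n \<Rightarrow> real^'n" where
  "Gmap gradf psi x = (THE d. \<forall>e. Qm gradf psi x (mat 1) d \<le> Qm gradf psi x (mat 1) e)"

definition loewner_between :: "real \<Rightarrow> real^'n^'n \<Rightarrow> real \<Rightarrow> bool" where
  "loewner_between a H b \<longleftrightarrow> (\<forall>v. a * (v \<bullet> v) \<le> v \<bullet> (H *v v) \<and> v \<bullet> (H *v v) \<le> b * (v \<bullet> v))"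

definition symmetric_mat :: "real^'n^'n \<Rightarrow> bool" where
  "symmetric_mat H \<longleftrightarrow> transpose H = H"

definition Delta :: "(real^'n \<Rightarrow> real^'n) \<Rightarrow> (real^'n \<Rightarrow> ereal) \<Rightarrow> real^'n \<Rightarrow> real^'n \<Rightarrow> ereal" where
  "Delta gradf psi x d = ereal (gradf x \<bullet> d) + psi (x + d) - psi x"

definition armijo :: "(real^'n \<Rightarrow> real) \<Rightarrow> (real^'n \<Rightarrow> real^'n) \<Rightarrow> (real^'n \<Rightarrow> ereal) \<Rightarrow> real
    \<Rightarrow> real^'n \<Rightarrow> real^'n \<Rightarrow> real \<Rightarrow> bool" where
  "armijo f gradf psi \<gamma> x d a \<longleftrightarrow>
     Fobj f psi (x + a *\<^sub>R d) \<le> Fobj f psi x + ereal (a * \<gamma>) * Delta gradf psi x d"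

text \<open>A run (x, H, d, alpha) of Algorithm 1.  Strong convexity of Q_k is implied by the
 bound sigma I \<preceq> H_k with sigma > 0 assumed in the corollary.\<close>
definition alg1_run :: "(real^'n \<Rightarrow> real) \<Rightarrow> (real^'n \<Rightarrow> real^'n) \<Rightarrow> (real^'n \<Rightarrow> ereal)
    \<Rightarrow> real \<Rightarrow> real \<Rightarrow> real \<Rightarrow> (nat \<Rightarrow> real^'n) \<Rightarrow> (nat \<Rightarrow> real^'n^'n)
    \<Rightarrow> (nat \<Rightarrow> real^'n) \<Rightarrow> (nat \<Rightarrow> real) \<Rightarrow> bool" where
  "alg1_run f gradf psi \<beta> \<gamma> \<eta> x H d \<alpha> \<longleftrightarrow>
     0 < \<beta> \<and> \<beta> < 1 \<and> 0 < \<gamma> \<and> \<gamma> < 1 \<and> 0 \<le> \<eta> \<and> \<eta> < 1 \<and>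
     (\<forall>k. symmetric_mat (H k) \<and>
          inexact \<eta> gradf psi (x k) (H k) (d k) \<and>
          (\<exists>i::nat. \<alpha> k = \<beta> ^ i \<and> armijo f gradf psi \<gamma> (x k) (d k) (\<beta> ^ i) \<and>
                 (\<forall>j<i. \<not> armijo f gradf psi \<gamma> (x k) (d k) (\<beta> ^ j))) \<and>
          x (Suc k) = x k + \<alpha> k *\<^sub>R d k)"

text \<open>Trial matrices in the inner loop of Algorithm 2 (j = number of failed tests so far).
 Variant 1: H = H0 / alpha with alpha = beta^j.
 Variant 2: H = H0 + alpha^{-1} I with alpha = beta^(j-1) (before the update of alpha).\<close>
definition trialH :: "nat \<Rightarrow> real \<Rightarrow> real^'n^'n \<Rightarrow> nat \<Rightarrow> real^'n^'n" where
  "trialH variant \<beta> H0 j =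
     (if variant = 1 then (1 / \<beta> ^ j) *\<^sub>R H0
      else if j = 0 then H0 else H0 + (1 / \<beta> ^ (j - 1)) *\<^sub>R mat 1)"

definition accept2 :: "(real^'n \<Rightarrow> real) \<Rightarrow> (real^'n \<Rightarrow> real^'n) \<Rightarrow> (real^'n \<Rightarrow> ereal) \<Rightarrow> real
    \<Rightarrow> real^'n \<Rightarrow> real^'n^'n \<Rightarrow> real^'n \<Rightarrow> bool" where
  "accept2 f gradf psi \<gamma> x H d \<longleftrightarrow>
     Fobj f psi x - Fobj f psi (x + d) \<ge> - (ereal \<gamma> * Qm gradf psi x H d) \<and>
     - (ereal \<gamma> * Qm gradf psi x H d) \<ge> 0"

text \<open>A run of Algorithm 2 (variant 1 or 2): nb k is the number of failed acceptance tests
 in iteration k, D k j the direction computed for the j-th trial matrix.\<close>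
definition alg2_run :: "nat \<Rightarrow> (real^'n \<Rightarrow> real) \<Rightarrow> (real^'n \<Rightarrow> real^'n) \<Rightarrow> (real^'n \<Rightarrow> ereal)
    \<Rightarrow> real \<Rightarrow> real \<Rightarrow> real \<Rightarrow> (nat \<Rightarrow> real^'n) \<Rightarrow> (nat \<Rightarrow> real^'n^'n)
    \<Rightarrow> (nat \<Rightarrow> nat) \<Rightarrow> (nat \<Rightarrow> nat \<Rightarrow> real^'n) \<Rightarrow> bool" where
  "alg2_run variant f gradf psi \<beta> \<gamma> \<eta> x H0 nb D \<longleftrightarrow>
     0 < \<beta> \<and> \<beta> < 1 \<and> 0 < \<gamma> \<and> \<gamma> \<le> 1 \<and> 0 \<le> \<eta> \<and> \<eta> < 1 \<and>
     (\<forall>k. symmetric_mat (H0 k) \<and>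
          (\<forall>j \<le> nb k. inexact \<eta> gradf psi (x k) (trialH variant \<beta> (H0 k) j) (D k j)) \<and>
          (\<forall>j < nb k. \<not> accept2 f gradf psi \<gamma> (x k) (trialH variant \<beta> (H0 k) j) (D k j)) \<and>
          accept2 f gradf psi \<gamma> (x k) (trialH variant \<beta> (H0 k) (nb k)) (D k (nb k)) \<and>
          x (Suc k) = x k + D k (nb k))"

definition tildeM1 :: "real \<Rightarrow> real \<Rightarrow> real \<Rightarrow> real \<Rightarrow> real \<Rightarrow> real \<Rightarrow> real" where
  "tildeM1 L \<beta> \<gamma> m0 M0 \<eta> =
     M0 * max 1 (L * (1 + sqrt \<eta>) / (\<beta> * (2 - \<gamma> * (1 - sqrt \<eta>)) * m0))"

definition tildeM2 :: "real \<Rightarrow> real \<Rightarrow> real \<Rightarrow> real \<Rightarrow> real \<Rightarrow> real \<Rightarrow> real" where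
  "tildeM2 L \<beta> \<gamma> m0 M0 \<eta> =
     M0 + max 1 ((1 / \<beta>) * (L * (1 + sqrt \<eta>) / (2 - \<gamma> * (1 - sqrt \<eta>)) - m0))"

definition cconst :: "real \<Rightarrow> real \<Rightarrow> real" where
  "cconst s M = M\<^sup>2 * (1 + 1 / s + sqrt (1 - 2 / M + 1 / s\<^sup>2))\<^sup>2"

definition minGsq :: "(real^'n \<Rightarrow> real^'n) \<Rightarrow> (real^'n \<Rightarrow> ereal) \<Rightarrow> (nat \<Rightarrow> real^'n) \<Rightarrow> nat \<Rightarrow> real" where
  "minGsq gradf psi x k = Min ((\<lambda>t. (norm (Gmap gradf psi (x t)))\<^sup>2) ` {..k})"

end

theory Submission
  imports Defs
begin


lemma A1_psi_nm: "assumption1 f gradf L psi \<Longrightarrow> psi y \<noteq> -\<infinity>"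
  by (simp add: assumption1_def ext_proper_def)

lemma A1_L: "assumption1 f gradf L psi \<Longrightarrow> L > 0"
  by (simp add: assumption1_def)

lemma psi_conv:
  assumes A1: "assumption1 f gradf L psi" and s: "0 \<le> s" "s \<le> 1"
  shows "psi (x + s *\<^sub>R d) \<le> ereal (1 - s) * psi x + ereal s * psi (x + d)"
proof -
  have c: "ext_convex psi" using A1 by (simp add: assumption1_def)
  have "(1 - s) *\<^sub>R x + s *\<^sub>R (x + d) = x + s *\<^sub>R d" by (simp add: algebra_simps)
  with c s show ?thesis unfolding ext_convex_def by metis
qed

lemma psi_conv_real:
  assumes A1: "assumption1 f gradf L psi" and s: "0 \<le> s" "s \<le> 1"
    and px: "psi x = ereal px" and pd: "psi (x + d) = ereal pd"
  obtains p' where "psi (x + s *\<^sub>R d) = ereal p'" "p' \<le> (1 - s) * px + s * pd"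
proof -
  have "psi (x + s *\<^sub>R d) \<le> ereal ((1 - s) * px + s * pd)"
    using psi_conv[OF A1 s, of x d] px pd by simp
  moreover have "psi (x + s *\<^sub>R d) \<noteq> -\<infinity>" using A1_psi_nm[OF A1] .
  ultimately show ?thesis using that
    by (cases "psi (x + s *\<^sub>R d)") auto
qed

lemma descent:
  assumes A1: "assumption1 f gradf L psi"
  shows "f (x + d) \<le> f x + gradf x \<bullet> d + L / 2 * (norm d)^2"
proof -
  have fd: "\<And>y. (f has_derivative (\<lambda>v. gradf y \<bullet> v)) (at y)"
    and lip: "\<And>y z. norm (gradf y - gradf z) \<le> L * norm (y - z)"
    using A1 by (auto simp: assumption1_def)
  define \<phi> where "\<phi> t = f (x + t *\<^sub>R d) - t * (gradf x \<bullet> d) - L * t^2 * (norm d)^2 / 2" for t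
  have der: "DERIV \<phi> t :> (gradf (x + t *\<^sub>R d) \<bullet> d - gradf x \<bullet> d - L * t * (norm d)^2)" for t
  proof -
    have l: "((\<lambda>t. x + t *\<^sub>R d) has_derivative (\<lambda>h. h *\<^sub>R d)) (at t)"
      by (auto intro!: derivative_eq_intros)
    have "((\<lambda>t. f (x + t *\<^sub>R d)) has_derivative (\<lambda>h. gradf (x + t *\<^sub>R d) \<bullet> (h *\<^sub>R d))) (at t)"
      using has_derivative_compose[OF l fd] by simp
    moreover have "(\<lambda>h. gradf (x + t *\<^sub>R d) \<bullet> (h *\<^sub>R d)) = (*) (gradf (x + t *\<^sub>R d) \<bullet> d)"
      by (auto simp: mult.commute)
    ultimately have "((\<lambda>t. f (x + t *\<^sub>R d)) has_real_derivative (gradf (x + t *\<^sub>R d) \<bullet> d)) (at t)"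
      by (simp add: has_field_derivative_def)
    then show ?thesis unfolding \<phi>_def
      by (auto intro!: derivative_eq_intros simp: algebra_simps)
  qed
  have "\<phi> 1 \<le> \<phi> 0"
  proof (rule DERIV_nonpos_imp_nonincreasing[of 0 1 \<phi>])
    fix t :: real assume t: "0 \<le> t" "t \<le> 1"
    have "gradf (x + t *\<^sub>R d) \<bullet> d - gradf x \<bullet> d = (gradf (x + t *\<^sub>R d) - gradf x) \<bullet> d"
      by (simp add: inner_diff_left)
    also have "\<dots> \<le> norm (gradf (x + t *\<^sub>R d) - gradf x) * norm d"
      by (rule norm_cauchy_schwarz)
    also have "\<dots> \<le> L * norm (t *\<^sub>R d) * norm d"
      using lip[of "x + t *\<^sub>R d" x] by (simp add: mult_right_mono)
    also have "\<dots> = L * t * (norm d)^2" using t by (simp add: power2_eq_square)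
    finally show "\<exists>y. DERIV \<phi> t :> y \<and> y \<le> 0" using der[of t] by (intro exI[of _ "gradf (x + t *\<^sub>R d) \<bullet> d - gradf x \<bullet> d - L * t * (norm d)^2"]) auto
  qed simp
  thus ?thesis unfolding \<phi>_def by simp
qed

lemma delta_lemma:
  fixes D q qs \<eta> :: real
  assumes eta: "0 \<le> \<eta>" "\<eta> < 1" and q: "0 \<le> q" and h: "D + q \<le> (1 - \<eta>) * qs"
    and hs: "\<And>s. 0 \<le> s \<Longrightarrow> s \<le> 1 \<Longrightarrow> qs \<le> s * D + s^2 * q"
  shows "2 * q / (1 + sqrt \<eta>) \<le> - D"
proof -
  define e where "e = sqrt \<eta>"
  have e0: "0 \<le> e" and e1: "e < 1" using eta by (auto simp: e_def real_sqrt_lt_1_iff)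
  have ee: "\<eta> = e^2" using eta by (simp add: e_def)
  have qs0: "qs \<le> 0" using hs[of 0] by simp
  have D0: "D \<le> -q" using h qs0 eta mult_nonneg_nonpos[of "1-\<eta>" qs] by linarith
  show ?thesis
  proof (cases "q = 0")
    case True thus ?thesis using D0 by simp
  next
    case False
    hence qp: "q > 0" using q by simp
    show ?thesis
    proof (cases "-D \<ge> 2 * q")
      case True
      have "2 * q / (1 + e) \<le> 2 * q" using qp e0 by (simp add: divide_le_eq)
      thus ?thesis using True e_def by simp
    next
      case False
      define s where "s = - D / (2 * q)"
      have s0: "0 \<le> s" using D0 qp unfolding s_def by (intro divide_nonneg_pos) auto
      have s1: "s \<le> 1" using False qp unfolding s_def by (subst pos_divide_le_eq) auto
      have "qs \<le> s * D + s^2 * q" using hs s0 s1 by simp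
      also have "s * D + s^2 * q = - (D^2) / (4 * q)" using qp
        by (simp add: s_def power2_eq_square field_simps)
      finally have "qs \<le> - (D^2) / (4 * q)" .
      hence "(1 - \<eta>) * qs \<le> (1 - \<eta>) * (- (D^2) / (4 * q))" using eta by (intro mult_left_mono) auto
      with h have "D + q \<le> (1 - \<eta>) * (- (D^2) / (4 * q))" by linarith
      hence "4 * q * (D + q) \<le> 4 * q * ((1 - \<eta>) * (- (D^2) / (4 * q)))"
        using qp by (intro mult_left_mono) auto
      also have "\<dots> = - ((1 - \<eta>) * D^2)" using qp by simp
      finally have key: "((1 + e) * (-D) - 2*q) * ((1 - e) * (-D) - 2*q) \<le> 0"
        by (simp add: ee algebra_simps power2_eq_square)
      show ?thesis
      proof (rule ccontr)
        assume "\<not> ?thesis"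
        hence "- D < 2 * q / (1 + e)" by (simp add: e_def)
        hence "(-D) * (1 + e) < 2 * q" using e0 by (simp add: pos_less_divide_eq)
        moreover have "(1 - e) * (-D) \<le> (1 + e) * (-D)" using D0 qp e0
          by (intro mult_right_mono) auto
        ultimately have a: "(1 + e) * (-D) - 2*q < 0" and b: "(1 - e) * (-D) - 2*q < 0"
          by (auto simp: mult.commute)
        have "0 < ((1 + e) * (-D) - 2*q) * ((1 - e) * (-D) - 2*q)"
          using mult_neg_neg[OF a b] .
        with key show False by linarith
      qed
    qed
  qed
qed

lemma cconst_ge:
  assumes "0 < \<sigma>" "\<sigma> \<le> M"
  shows "4 * \<sigma> * max M 1 \<le> cconst \<sigma> M"
proof -
  define S where "S = sqrt (1 - 2 / M + 1 / \<sigma>^2)"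
  have Mp: "M > 0" using assms by simp
  have "1/M \<le> 1/\<sigma>" using assms by (simp add: frac_le)
  moreover have "(1 - 1/\<sigma>)^2 = 1 - 2/\<sigma> + 1/\<sigma>^2" using assms by (simp add: power2_eq_square field_simps)
  ultimately have "(1 - 1/\<sigma>)^2 \<le> 1 - 2 / M + 1 / \<sigma>^2" by simp
  hence "sqrt ((1 - 1/\<sigma>)^2) \<le> S" unfolding S_def by (rule real_sqrt_le_mono)
  hence Sge: "\<bar>1 - 1/\<sigma>\<bar> \<le> S" by simp
  define w where "w = 1 + 1/\<sigma> + S"
  have w2: "2 \<le> w" and w3: "2 / \<sigma> \<le> w" using Sge unfolding w_def by (auto simp: abs_if split: if_splits)
  have cc: "cconst \<sigma> M = M^2 * w^2" by (simp add: cconst_def w_def S_def)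
  show ?thesis
  proof (cases "M \<ge> 1")
    case True
    have "4 * \<sigma> * max M 1 = 4 * \<sigma> * M" using True by simp
    also have "\<dots> \<le> 4 * M * M" using assms by (simp add: mult_right_mono)
    also have "\<dots> \<le> M^2 * w^2"
    proof -
      have "4 \<le> w^2" using w2 power_mono[of 2 w 2] by simp
      thus ?thesis using Mp by (simp add: power2_eq_square mult_right_mono mult.commute)
    qed
    finally show ?thesis using cc by simp
  next
    case False
    have "4 * \<sigma> * max M 1 = 4 * \<sigma>" using False by simp
    also have "\<dots> \<le> 4" using assms False by simp
    also have "4 \<le> M^2 * w^2"
    proof -
      have "(2/\<sigma>)^2 \<le> w^2" using w3 assms by (intro power_mono) auto
      hence "M^2 * (2/\<sigma>)^2 \<le> M^2 * w^2" by (simp add: mult_left_mono)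
      moreover have "4 \<le> M^2 * (2/\<sigma>)^2"
      proof -
        have "1 \<le> M / \<sigma>" using assms by simp
        hence "1 \<le> (M/\<sigma>)^2" by (simp add: one_le_power)
        thus ?thesis by (simp add: power_divide field_simps)
      qed
      ultimately show ?thesis by linarith
    qed
    finally show ?thesis using cc by simp
  qed
qed




lemma Qm_real:
  assumes "psi x = ereal px" "psi (x + d) = ereal pd"
  shows "Qm gradf psi x H d = ereal (gradf x \<bullet> d + 1/2 * (d \<bullet> (H *v d)) + pd - px)"
  using assms by (simp add: Qm_def)

lemma Qm_zero: "psi x = ereal px \<Longrightarrow> Qm gradf psi x H 0 = 0"
  by (simp add: Qm_def zero_ereal_def)

lemma Qstar_le: "Qstar gradf psi x H \<le> Qm gradf psi x H e"
  unfolding Qstar_def by (rule INF_lower) simp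

lemma inexact_facts:
  assumes A1: "assumption1 f gradf L psi" and px: "psi x = ereal px"
    and inx: "inexact \<eta> gradf psi x H d" and eta: "0 \<le> \<eta>" "\<eta> < 1"
  obtains qs pd where "Qstar gradf psi x H = ereal qs" "psi (x + d) = ereal pd"
    "gradf x \<bullet> d + 1/2 * (d \<bullet> (H *v d)) + pd - px \<le> (1 - \<eta>) * qs" "qs \<le> 0"
proof -
  have q0: "Qstar gradf psi x H \<le> 0" using Qstar_le[of gradf psi x H 0] Qm_zero[of psi x px gradf H, OF px] by simp
  have le: "Qm gradf psi x H d \<le> ereal (1 - \<eta>) * Qstar gradf psi x H"
    using inx by (simp add: inexact_def)
  have pnm: "psi (x + d) \<noteq> -\<infinity>" by (rule A1_psi_nm[OF A1])
  show ?thesis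
  proof (cases "Qstar gradf psi x H")
    case (real qs)
    hence qs0: "qs \<le> 0" using q0 by (simp add: zero_ereal_def)
    show ?thesis
    proof (cases "psi (x + d)")
      case (real pd)
      show ?thesis using that[of qs pd] le real \<open>Qstar gradf psi x H = ereal qs\<close> qs0 px
        by (simp add: Qm_real)
    next
      case PInf
      hence "Qm gradf psi x H d = \<infinity>" using px by (simp add: Qm_def)
      with le real show ?thesis by simp
    next
      case MInf with pnm show ?thesis by simp
    qed
  next
    case PInf with q0 show ?thesis by simp
  next
    case MInf
    hence "Qm gradf psi x H d = -\<infinity>" using le eta by simp
    moreover have "Qm gradf psi x H d \<noteq> -\<infinity>" using px pnm by (cases "psi (x + d)") (auto simp: Qm_def)
    ultimately show ?thesis by simp
  qed
qed

lemma Qstar_scaled: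
  assumes A1: "assumption1 f gradf L psi" and px: "psi x = ereal px" and pd: "psi (x + d) = ereal pd"
    and s: "0 \<le> s" "s \<le> 1"
  shows "Qstar gradf psi x H \<le> ereal (s * (gradf x \<bullet> d + pd - px) + s^2 * (d \<bullet> (H *v d)) / 2)"
proof -
  obtain p' where p': "psi (x + s *\<^sub>R d) = ereal p'" "p' \<le> (1 - s) * px + s * pd"
    using psi_conv_real[OF A1 s px pd] by blast
  have "Qstar gradf psi x H \<le> Qm gradf psi x H (s *\<^sub>R d)" by (rule Qstar_le)
  also have "\<dots> = ereal (gradf x \<bullet> (s *\<^sub>R d) + 1/2 * ((s *\<^sub>R d) \<bullet> (H *v (s *\<^sub>R d))) + p' - px)"
    using Qm_real[OF px p'(1)] .
  also have "\<dots> \<le> ereal (s * (gradf x \<bullet> d + pd - px) + s^2 * (d \<bullet> (H *v d)) / 2)"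
  proof -
    have e1: "(s *\<^sub>R d) \<bullet> (H *v (s *\<^sub>R d)) = s^2 * (d \<bullet> (H *v d))"
      by (simp add: matrix_vector_mult_scaleR power2_eq_square)
    have e2: "gradf x \<bullet> (s *\<^sub>R d) = s * (gradf x \<bullet> d)" by simp
    have "gradf x \<bullet> (s *\<^sub>R d) + 1/2 * ((s *\<^sub>R d) \<bullet> (H *v (s *\<^sub>R d))) + p' - px
       \<le> s * (gradf x \<bullet> d + pd - px) + s^2 * (d \<bullet> (H *v d)) / 2"
      unfolding e1 e2 using p'(2) by (simp add: right_diff_distrib left_diff_distrib distrib_left)
    thus ?thesis by simp
  qed
  finally show ?thesis .
qed

lemma neg_delta_bound:
  assumes A1: "assumption1 f gradf L psi" and px: "psi x = ereal px"
    and inx: "inexact \<eta> gradf psi x H d" and eta: "0 \<le> \<eta>" "\<eta> < 1"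
    and low: "\<forall>v. c * (v \<bullet> v) \<le> v \<bullet> (H *v v)" and c: "0 \<le> c"
  obtains pd qs where "psi (x + d) = ereal pd" "Qstar gradf psi x H = ereal qs"
    "gradf x \<bullet> d + 1/2 * (d \<bullet> (H *v d)) + pd - px \<le> (1 - \<eta>) * qs" "qs \<le> 0"
    "d \<bullet> (H *v d) / (1 + sqrt \<eta>) \<le> - (gradf x \<bullet> d + pd - px)"
    "c * (d \<bullet> d) \<le> d \<bullet> (H *v d)"
proof -
  obtain qs pd where qs: "Qstar gradf psi x H = ereal qs" and pd: "psi (x + d) = ereal pd"
    and h: "gradf x \<bullet> d + 1/2 * (d \<bullet> (H *v d)) + pd - px \<le> (1 - \<eta>) * qs" and qs0: "qs \<le> 0"
    using inexact_facts[OF A1 px inx eta] by blast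
  have cd: "c * (d \<bullet> d) \<le> d \<bullet> (H *v d)" using low by simp
  have "0 \<le> c * (d \<bullet> d)" using c by simp
  hence q0: "0 \<le> (d \<bullet> (H *v d)) / 2" using cd by linarith
  have "2 * ((d \<bullet> (H *v d)) / 2) / (1 + sqrt \<eta>) \<le> - (gradf x \<bullet> d + pd - px)"
  proof (rule delta_lemma[OF eta q0])
    show "gradf x \<bullet> d + pd - px + d \<bullet> (H *v d) / 2 \<le> (1 - \<eta>) * qs" using h by simp
    fix s :: real assume "0 \<le> s" "s \<le> 1"
    thus "qs \<le> s * (gradf x \<bullet> d + pd - px) + s^2 * (d \<bullet> (H *v d) / 2)"
      using Qstar_scaled[OF A1 px pd, of s H] qs by simp
  qed
  hence "d \<bullet> (H *v d) / (1 + sqrt \<eta>) \<le> - (gradf x \<bullet> d + pd - px)" by simp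
  from that[OF pd qs h qs0 this cd] show ?thesis .
qed

lemma armijo_suff:
  assumes A1: "assumption1 f gradf L psi" and px: "psi x = ereal px"
    and inx: "inexact \<eta> gradf psi x H d" and eta: "0 \<le> \<eta>" "\<eta> < 1"
    and low: "\<forall>v. \<sigma> * (v \<bullet> v) \<le> v \<bullet> (H *v v)" and sig: "0 < \<sigma>"
    and gam: "0 < \<gamma>" "\<gamma> < 1" and a: "0 < a" "a \<le> 1"
    and aT: "a \<le> 2 * (1 - \<gamma>) * \<sigma> / (L * (1 + sqrt \<eta>))"
  shows "armijo f gradf psi \<gamma> x d a"
proof -
  obtain pd qs where pd: "psi (x + d) = ereal pd"
    and nd: "d \<bullet> (H *v d) / (1 + sqrt \<eta>) \<le> - (gradf x \<bullet> d + pd - px)"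
    and cd: "\<sigma> * (d \<bullet> d) \<le> d \<bullet> (H *v d)"
    using neg_delta_bound[OF A1 px inx eta low] sig by auto
  define Dl where "Dl = gradf x \<bullet> d + pd - px"
  define e where "e = sqrt \<eta>"
  have e0: "0 \<le> e" using eta by (simp add: e_def)
  have Lp: "L > 0" using A1_L[OF A1] .
  obtain p' where p': "psi (x + a *\<^sub>R d) = ereal p'" "p' \<le> (1 - a) * px + a * pd"
    using psi_conv_real[OF A1 _ a(2) px pd] a by auto
  have fd: "f (x + a *\<^sub>R d) \<le> f x + a * (gradf x \<bullet> d) + L / 2 * (a^2 * (d \<bullet> d))"
  proof -
    have "(norm (a *\<^sub>R d))^2 = a^2 * (d \<bullet> d)" by (simp add: power_mult_distrib power2_norm_eq_inner)
    thus ?thesis using descent[OF A1, of x "a *\<^sub>R d"] by simp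
  qed
  have nd2: "\<sigma> * (d \<bullet> d) / (1 + e) \<le> - Dl"
  proof -
    have "\<sigma> * (d \<bullet> d) / (1 + e) \<le> d \<bullet> (H *v d) / (1 + e)"
      using cd e0 by (intro divide_right_mono) auto
    also have "\<dots> \<le> - Dl" using nd by (simp add: Dl_def e_def)
    finally show ?thesis .
  qed
  have "L * a \<le> L * (2 * (1 - \<gamma>) * \<sigma> / (L * (1 + sqrt \<eta>)))"
    using aT Lp by (intro mult_left_mono) auto
  also have "\<dots> = 2 * (1 - \<gamma>) * \<sigma> / (1 + e)" using Lp by (simp add: e_def)
  finally have "L * a * ((d \<bullet> d) / 2) \<le> 2 * (1 - \<gamma>) * \<sigma> / (1 + e) * ((d \<bullet> d) / 2)"
    by (intro mult_right_mono) auto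
  also have "2 * (1 - \<gamma>) * \<sigma> / (1 + e) * ((d \<bullet> d) / 2) = (1 - \<gamma>) * (\<sigma> * (d \<bullet> d) / (1 + e))"
    using e0 by (simp add: field_simps)
  finally have "L * a * (d \<bullet> d) / 2 \<le> (1 - \<gamma>) * (\<sigma> * (d \<bullet> d) / (1 + e))" by simp
  also have "\<dots> \<le> (1 - \<gamma>) * (- Dl)" using nd2 gam by (intro mult_left_mono) auto
  finally have key: "L * a * (d \<bullet> d) / 2 \<le> (1 - \<gamma>) * (- Dl)" .
  have "f (x + a *\<^sub>R d) + p' \<le> f x + px + a * \<gamma> * Dl"
  proof -
    have "a * (L * a * (d \<bullet> d) / 2) \<le> a * ((1 - \<gamma>) * (- Dl))" using key a by (intro mult_left_mono) auto
    thus ?thesis using fd p'(2) unfolding Dl_def by (simp add: algebra_simps power2_eq_square)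
  qed
  thus ?thesis using p' px pd unfolding armijo_def Fobj_def Delta_def Dl_def by simp
qed

lemma accept_suff:
  assumes A1: "assumption1 f gradf L psi" and px: "psi x = ereal px"
    and inx: "inexact \<eta> gradf psi x H d" and eta: "0 \<le> \<eta>" "\<eta> < 1"
    and low: "\<forall>v. c * (v \<bullet> v) \<le> v \<bullet> (H *v v)"
    and gam: "0 < \<gamma>" "\<gamma> \<le> 1"
    and cL: "L * (1 + sqrt \<eta>) / (2 - \<gamma> * (1 - sqrt \<eta>)) \<le> c"
  shows "accept2 f gradf psi \<gamma> x H d"
proof -
  define e where "e = sqrt \<eta>"
  have e0: "0 \<le> e" and e1: "e < 1" using eta by (auto simp: e_def real_sqrt_lt_1_iff)
  have Lp: "L > 0" using A1_L[OF A1] .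
  have den: "0 < 2 - \<gamma> * (1 - e)"
  proof -
    have "\<gamma> * (1 - e) \<le> 1 * 1" using gam e0 e1 by (intro mult_mono) auto
    thus ?thesis by simp
  qed
  have "0 \<le> L * (1 + e) / (2 - \<gamma> * (1 - e))" using Lp e0 den by (intro divide_nonneg_pos) auto
  hence c0: "0 \<le> c" using cL by (simp add: e_def)
  obtain pd qs where pd: "psi (x + d) = ereal pd" and qs: "Qstar gradf psi x H = ereal qs"
    and h: "gradf x \<bullet> d + 1/2 * (d \<bullet> (H *v d)) + pd - px \<le> (1 - \<eta>) * qs" and qs0: "qs \<le> 0"
    and nd: "d \<bullet> (H *v d) / (1 + sqrt \<eta>) \<le> - (gradf x \<bullet> d + pd - px)"
    and cd: "c * (d \<bullet> d) \<le> d \<bullet> (H *v d)"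
    using neg_delta_bound[OF A1 px inx eta low c0] by blast
  define Dl where "Dl = gradf x \<bullet> d + pd - px"
  define q where "q = d \<bullet> (H *v d)"
  have fd: "f (x + d) \<le> f x + gradf x \<bullet> d + L / 2 * (d \<bullet> d)"
    using descent[OF A1, of x d] by (simp add: power2_norm_eq_inner)
  have "(1 - \<eta>) * qs \<le> 0" using qs0 eta by (intro mult_nonneg_nonpos) auto
  hence Q0: "Dl + q / 2 \<le> 0" using h unfolding Dl_def q_def by linarith
  have nd': "q / (1 + e) \<le> - Dl" using nd by (simp add: Dl_def q_def e_def)
  have "L * (d \<bullet> d) \<le> c * (2 - \<gamma> * (1 - e)) / (1 + e) * (d \<bullet> d)"
  proof -
    have "L \<le> c * (2 - \<gamma> * (1 - e)) / (1 + e)"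
    proof -
      have cL': "L * (1 + e) / (2 - \<gamma> * (1 - e)) \<le> c" using cL by (simp add: e_def)
      hence "L * (1 + e) \<le> c * (2 - \<gamma> * (1 - e))" using den by (simp add: pos_divide_le_eq)
      thus ?thesis using e0 by (simp add: pos_le_divide_eq)
    qed
    thus ?thesis by (intro mult_right_mono) auto
  qed
  also have "\<dots> = (c * (d \<bullet> d)) * ((2 - \<gamma> * (1 - e)) / (1 + e))" by simp
  also have "\<dots> \<le> q * ((2 - \<gamma> * (1 - e)) / (1 + e))"
    using cd den e0 unfolding q_def by (intro mult_right_mono) auto
  also have "\<dots> = q * (2 - \<gamma> * (1 - e)) / (1 + e)" by simp
  also have "\<dots> = 2 * (1 - \<gamma>) * (q / (1 + e)) + \<gamma> * q"
    using e0 by (simp add: field_simps)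
  also have "\<dots> \<le> 2 * (1 - \<gamma>) * (- Dl) + \<gamma> * q"
    using nd' gam by (intro add_right_mono mult_left_mono) auto
  finally have key: "L * (d \<bullet> d) \<le> 2 * (1 - \<gamma>) * (- Dl) + \<gamma> * q" .
  have r1: "- (\<gamma> * (Dl + q / 2)) \<le> f x + px - (f (x + d) + pd)"
    using fd key unfolding Dl_def by (simp add: algebra_simps)
  have r2: "0 \<le> - (\<gamma> * (Dl + q / 2))" using Q0 gam by (simp add: mult_nonneg_nonpos)
  have Qe: "Qm gradf psi x H d = ereal (Dl + q / 2)" using Qm_real[OF px pd] by (simp add: Dl_def q_def)
  show ?thesis unfolding accept2_def Fobj_def using r1 r2 Qe px pd by simp
qed




lemma QI_real: "psi x = ereal px \<Longrightarrow> psi (x + e) = ereal p \<Longrightarrow>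
   Qm gradf psi x (mat 1) e = ereal (gradf x \<bullet> e + (e \<bullet> e) / 2 + p - px)"
  by (simp add: Qm_def)

lemma QI_inf: "psi x = ereal px \<Longrightarrow> psi (x + e) = \<infinity> \<Longrightarrow> Qm gradf psi x (mat 1) e = \<infinity>"
  by (simp add: Qm_def)

lemma QI_lower:
  assumes A1: "assumption1 f gradf L psi" and px: "psi x = ereal px"
    and qs: "Qstar gradf psi x H = ereal qs"
    and up: "\<forall>v. v \<bullet> (H *v v) \<le> M * (v \<bullet> v)" and Mp: "0 < M"
  shows "ereal (qs * (2 * max M 1) + (e \<bullet> e) / 4) \<le> Qm gradf psi x (mat 1) e"
proof (cases "psi (x + e)")
  case PInf thus ?thesis using QI_inf[OF px PInf] by simp
next
  case MInf thus ?thesis using A1_psi_nm[OF A1] by simp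
next
  case (real p)
  define s where "s = 1 / (2 * max M 1)"
  have s0: "0 < s" and s1: "s \<le> 1" using Mp by (auto simp: s_def)
  have sM: "s * M \<le> 1/2" using Mp by (simp add: s_def field_simps)
  have "ereal qs \<le> ereal (s * (gradf x \<bullet> e + p - px) + s^2 * (e \<bullet> (H *v e)) / 2)"
    using Qstar_scaled[OF A1 px real, of s H] s0 s1 qs by simp
  hence "qs \<le> s * (gradf x \<bullet> e + p - px) + s^2 * (e \<bullet> (H *v e)) / 2" by simp
  also have "s^2 * (e \<bullet> (H *v e)) / 2 \<le> s^2 * (M * (e \<bullet> e)) / 2"
    using up by (simp add: mult_left_mono)
  also have "s^2 * (M * (e \<bullet> e)) / 2 = s * ((s * M) * (e \<bullet> e) / 2)" by (simp add: power2_eq_square)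
  also have "\<dots> \<le> s * ((1/2) * (e \<bullet> e) / 2)"
    using sM s0 by (intro mult_left_mono divide_right_mono mult_right_mono) auto
  finally have "qs \<le> s * (gradf x \<bullet> e + p - px + (e \<bullet> e) / 4)" by (simp add: algebra_simps)
  hence "qs / s \<le> gradf x \<bullet> e + p - px + (e \<bullet> e) / 4" using s0 by (simp add: divide_le_eq mult.commute)
  moreover have "qs / s = qs * (2 * max M 1)" by (simp add: s_def)
  ultimately show ?thesis using QI_real[OF px real] by simp
qed

lemma QI_exists_min:
  assumes A1: "assumption1 f gradf L psi" and px: "psi x = ereal px"
    and lb: "\<And>e. ereal (K + (e \<bullet> e) / 4) \<le> Qm gradf psi x (mat 1) e"
  obtains l where "\<forall>e. Qm gradf psi x (mat 1) l \<le> Qm gradf psi x (mat 1) e"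
proof -
  define h where "h e = Qm gradf psi x (mat 1) e" for e
  define m where "m = (INF e. h e)"
  have m0: "m \<le> 0" using Qm_zero[of psi x px gradf "mat 1", OF px] unfolding m_def h_def
    by (metis INF_lower UNIV_I)
  have hK: "ereal K \<le> h e" for e
  proof -
    have "ereal K \<le> ereal (K + (e \<bullet> e) / 4)" by simp
    thus "ereal K \<le> h e" using lb[of e] unfolding h_def by (rule order_trans)
  qed
  have mK: "ereal K \<le> m" unfolding m_def by (rule INF_greatest) (rule hK)
  obtain mr where mr: "m = ereal mr" using m0 mK by (cases m) auto
  define S where "S r = {e. h e \<le> ereal r}" for r
  have Seq: "S r = (\<lambda>e. (x + e, r - gradf x \<bullet> e - (e \<bullet> e) / 2 + px)) -` {(y, a::real). psi y \<le> ereal a}" for r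
  proof (rule set_eqI)
    fix e show "e \<in> S r \<longleftrightarrow> e \<in> (\<lambda>e. (x + e, r - gradf x \<bullet> e - (e \<bullet> e) / 2 + px)) -` {(y, a::real). psi y \<le> ereal a}"
    proof (cases "psi (x + e)")
      case (real p) thus ?thesis using QI_real[OF px real] by (auto simp: S_def h_def)
    next
      case PInf thus ?thesis using QI_inf[OF px PInf] by (auto simp: S_def h_def)
    next
      case MInf thus ?thesis using A1_psi_nm[OF A1] by simp
    qed
  qed
  have cl: "closed (S r)" for r
  proof -
    have "closed {(y, a::real). psi y \<le> ereal a}" using A1 by (simp add: assumption1_def ext_closed_def)
    thus ?thesis unfolding Seq by (rule continuous_closed_vimage) (intro continuous_intros; simp)
  qed
  have bd: "bounded (S r)" for r
  proof -
    have "norm e \<le> sqrt (4 * \<bar>r - K\<bar>)" if "e \<in> S r" for e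
    proof -
      have "ereal (K + (e \<bullet> e) / 4) \<le> ereal r" using order_trans[OF lb[of e]] that unfolding S_def h_def by blast
      hence "e \<bullet> e \<le> 4 * \<bar>r - K\<bar>" by (simp add: abs_if)
      thus ?thesis by (simp add: norm_eq_sqrt_inner real_sqrt_le_mono)
    qed
    thus ?thesis unfolding bounded_iff by blast
  qed
  define F where "F n = S (mr + 1 / (real n + 1))" for n :: nat
  have "\<Inter>(range F) \<noteq> {}"
  proof (rule compact_nest)
    fix n show "compact (F n)" unfolding F_def using cl bd by (simp add: compact_eq_bounded_closed)
    have "m < ereal (mr + 1 / (real n + 1))" using mr by simp
    then obtain e where "h e < ereal (mr + 1 / (real n + 1))" unfolding m_def by (auto simp: Inf_less_iff)
    thus "F n \<noteq> {}" unfolding F_def S_def by (auto intro: less_imp_le)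
  next
    fix m n :: nat assume "m \<le> n"
    hence "1 / (real n + 1) \<le> 1 / (real m + 1)" by (simp add: frac_le)
    thus "F n \<subseteq> F m" unfolding F_def S_def by (auto intro: order_trans)
  qed
  then obtain l where l: "\<And>n. l \<in> F n" by blast
  have "h l \<le> m"
  proof -
    have l0: "h l \<le> ereal (mr + 1)" using l[of 0] by (simp add: F_def S_def)
    have "h l \<noteq> -\<infinity>" using lb[of l] h_def by auto
    with l0 obtain z where z: "h l = ereal z" by (cases "h l") auto
    have "z \<le> mr"
    proof (rule field_le_epsilon)
      fix \<epsilon> :: real assume "0 < \<epsilon>"
      then obtain n where n: "inverse (real (Suc n)) < \<epsilon>" using reals_Archimedean by blast
      have "z \<le> mr + 1 / (real n + 1)" using l[of n] z by (simp add: F_def S_def)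
      also have "1 / (real n + 1) = inverse (real (Suc n))" by (simp add: inverse_eq_divide)
      finally show "z \<le> mr + \<epsilon>" using n by simp
    qed
    thus ?thesis using z mr by simp
  qed
  hence "\<forall>e. h l \<le> h e" unfolding m_def by (meson INF_lower UNIV_I order_trans)
  thus ?thesis using that h_def by simp
qed

lemma QI_unique:
  assumes A1: "assumption1 f gradf L psi" and px: "psi x = ereal px"
    and a: "\<forall>e. Qm gradf psi x (mat 1) a \<le> Qm gradf psi x (mat 1) e"
    and b: "\<forall>e. Qm gradf psi x (mat 1) b \<le> Qm gradf psi x (mat 1) e"
  shows "a = b"
proof (rule ccontr)
  assume ne: "a \<noteq> b"
  define h where "h e = Qm gradf psi x (mat 1) e" for e
  have h0: "h a \<le> 0" "h b \<le> 0" using a[rule_format, of 0] b[rule_format, of 0] Qm_zero[of psi x px gradf "mat 1", OF px] by (auto simp: h_def)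
  have hab: "h a = h b" using a b by (auto simp: h_def intro: antisym)
  obtain pa where pa: "psi (x + a) = ereal pa"
    using h0 A1_psi_nm[OF A1, of "x + a"] px by (cases "psi (x + a)") (auto simp: h_def Qm_def)
  obtain pb where pb: "psi (x + b) = ereal pb"
    using h0 A1_psi_nm[OF A1, of "x + b"] px by (cases "psi (x + b)") (auto simp: h_def Qm_def)
  have pb': "psi ((x + a) + (b - a)) = ereal pb" using pb by simp
  obtain pc where pc: "psi ((x + a) + (1/2) *\<^sub>R (b - a)) = ereal pc" and pcle: "pc \<le> (1 - 1/2) * pa + (1/2) * pb"
    using psi_conv_real[OF A1 _ _ pa pb', of "1/2"] by auto
  define c where "c = a + (1/2) *\<^sub>R (b - a)"
  have pc': "psi (x + c) = ereal pc" using pc by (simp add: c_def add.assoc)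
  have ea: "gradf x \<bullet> a + (a \<bullet> a) / 2 + pa - px = gradf x \<bullet> b + (b \<bullet> b) / 2 + pb - px"
    using hab QI_real[OF px pa] QI_real[OF px pb] by (simp add: h_def)
  have "h a \<le> h c" using a by (simp add: h_def)
  hence le: "gradf x \<bullet> a + (a \<bullet> a) / 2 + pa - px \<le> gradf x \<bullet> c + (c \<bullet> c) / 2 + pc - px"
    using QI_real[OF px pa] QI_real[OF px pc'] by (simp add: h_def)
  have pos: "0 < (b - a) \<bullet> (b - a)" using ne by simp
  have cc: "c \<bullet> c = (a \<bullet> a + 2 * (a \<bullet> b) + b \<bullet> b) / 4"
    by (simp add: c_def algebra_simps inner_commute)
  have gc: "gradf x \<bullet> c = (gradf x \<bullet> a + gradf x \<bullet> b) / 2"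
    by (simp add: c_def algebra_simps)
  have dd: "(b - a) \<bullet> (b - a) = a \<bullet> a - 2 * (a \<bullet> b) + b \<bullet> b"
    by (simp add: algebra_simps inner_commute)
  show False using le ea pcle cc gc dd pos by (simp add: field_simps)
qed

lemma G_char:
  assumes A1: "assumption1 f gradf L psi" and px: "psi x = ereal px"
    and l: "\<forall>e. Qm gradf psi x (mat 1) l \<le> Qm gradf psi x (mat 1) e"
  shows "Gmap gradf psi x = l"
  unfolding Gmap_def
  by (rule the1_equality) (use l QI_unique[OF A1 px] in blast)+

lemma G_desc:
  assumes A1: "assumption1 f gradf L psi" and px: "psi x = ereal px"
    and l: "\<forall>e. Qm gradf psi x (mat 1) G \<le> Qm gradf psi x (mat 1) e"
  obtains pG where "psi (x + G) = ereal pG" "gradf x \<bullet> G + pG - px \<le> - (G \<bullet> G)"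
proof -
  define h where "h e = Qm gradf psi x (mat 1) e" for e
  have h0: "h G \<le> 0" using l[rule_format, of 0] Qm_zero[of psi x px gradf "mat 1", OF px] by (auto simp: h_def)
  obtain pG where pG: "psi (x + G) = ereal pG"
    using h0 A1_psi_nm[OF A1, of "x + G"] px by (cases "psi (x + G)") (auto simp: h_def Qm_def)
  define D where "D = gradf x \<bullet> G + pG - px"
  define n where "n = G \<bullet> G"
  have n0: "0 \<le> n" by (simp add: n_def)
  have tb: "D \<le> - (1 + t) * n / 2" if t: "0 \<le> t" "t < 1" for t
  proof -
    obtain p' where p': "psi (x + t *\<^sub>R G) = ereal p'" "p' \<le> (1 - t) * px + t * pG"
      using psi_conv_real[OF A1 t(1) _ px pG] t by auto
    have "h G \<le> h (t *\<^sub>R G)" using l by (simp add: h_def)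
    hence "D + n / 2 \<le> t * D + t^2 * n / 2 + (p' - ((1 - t) * px + t * pG))"
      using QI_real[OF px pG] QI_real[OF px p'(1)]
      by (simp add: h_def D_def n_def algebra_simps power2_eq_square)
    hence "D + n / 2 \<le> t * D + t^2 * n / 2" using p'(2) by linarith
    hence "(1 - t) * D \<le> (1 - t) * (- (1 + t) * n / 2)" by (simp add: algebra_simps power2_eq_square)
    thus ?thesis using t by simp
  qed
  have "D \<le> - n"
  proof (rule field_le_epsilon)
    fix \<epsilon> :: real assume ep: "0 < \<epsilon>"
    define \<delta> where "\<delta> = min 1 (\<epsilon> / (n + 1))"
    have d0: "0 < \<delta>" "\<delta> \<le> 1" using ep n0 by (auto simp: \<delta>_def)
    have "D \<le> - (1 + (1 - \<delta>)) * n / 2" using tb[of "1 - \<delta>"] d0 by simp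
    also have "\<dots> = - n + \<delta> * n / 2" by (simp add: field_simps)
    also have "\<delta> * n \<le> \<epsilon>"
    proof -
      have "\<delta> * n \<le> \<epsilon> / (n + 1) * n" using n0 by (intro mult_right_mono) (auto simp: \<delta>_def)
      also have "\<dots> \<le> \<epsilon>" using ep n0 by (simp add: field_simps)
      finally show ?thesis .
    qed
    hence "- n + \<delta> * n / 2 \<le> - n + \<epsilon>" using ep by simp
    finally show "D \<le> - n + \<epsilon>" .
  qed
  thus ?thesis using that pG by (simp add: D_def n_def)
qed

lemma G_bound:
  assumes A1: "assumption1 f gradf L psi" and px: "psi x = ereal px"
    and qs: "Qstar gradf psi x H = ereal qs"
    and up: "\<forall>v. v \<bullet> (H *v v) \<le> M * (v \<bullet> v)" and Mp: "0 < M"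
  shows "(norm (Gmap gradf psi x))^2 \<le> - qs * (2 * max M 1)"
proof -
  obtain l where l: "\<forall>e. Qm gradf psi x (mat 1) l \<le> Qm gradf psi x (mat 1) e"
    using QI_exists_min[OF A1 px QI_lower[OF A1 px qs up Mp]] by blast
  have G: "Gmap gradf psi x = l" using G_char[OF A1 px l] .
  obtain pG where pG: "psi (x + l) = ereal pG" and D: "gradf x \<bullet> l + pG - px \<le> - (l \<bullet> l)"
    using G_desc[OF A1 px l] by blast
  define s where "s = 1 / max M 1"
  have s0: "0 < s" "s \<le> 1" using Mp by (auto simp: s_def)
  have sM: "s * M \<le> 1" using Mp by (simp add: s_def field_simps)
  have "ereal qs \<le> ereal (s * (gradf x \<bullet> l + pG - px) + s^2 * (l \<bullet> (H *v l)) / 2)"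
    using Qstar_scaled[OF A1 px pG, of s H] s0 qs by simp
  hence "qs \<le> s * (gradf x \<bullet> l + pG - px) + s^2 * (l \<bullet> (H *v l)) / 2" by simp
  also have "\<dots> \<le> s * (- (l \<bullet> l)) + s^2 * (M * (l \<bullet> l)) / 2"
    using D up s0 by (intro add_mono mult_left_mono divide_right_mono) auto
  also have "s^2 * (M * (l \<bullet> l)) / 2 = s * ((s * M) * (l \<bullet> l)) / 2" by (simp add: power2_eq_square)
  also have "\<dots> \<le> s * (1 * (l \<bullet> l)) / 2"
    using sM s0 by (intro divide_right_mono mult_left_mono mult_right_mono) auto
  finally have "qs \<le> - s * (l \<bullet> l) / 2" by simp
  hence "(l \<bullet> l) \<le> - qs * (2 / s)" using s0 by (simp add: field_simps)
  thus ?thesis using G by (simp add: s_def power2_norm_eq_inner mult.commute)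
qed




lemma Fstar_real:
  assumes A1: "assumption1 f gradf L psi" and px0: "psi x0 \<noteq> \<infinity>"
  obtains fs where "Fstar f psi = ereal fs" "\<And>y. ereal fs \<le> Fobj f psi y"
proof -
  obtain c where c: "\<And>y. ereal c \<le> Fobj f psi y" using A1 by (auto simp: assumption1_def)
  have lo: "ereal c \<le> Fstar f psi" unfolding Fstar_def by (rule INF_greatest) (rule c)
  have up: "Fstar f psi \<le> Fobj f psi x0" unfolding Fstar_def by (rule INF_lower) simp
  have "Fobj f psi x0 \<noteq> \<infinity>" using px0 by (simp add: Fobj_def)
  with lo up obtain fs where fs: "Fstar f psi = ereal fs" by (cases "Fstar f psi") auto
  have "\<And>y. ereal fs \<le> Fobj f psi y" unfolding fs[symmetric] Fstar_def by (rule INF_lower) simp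
  with fs that show ?thesis by blast
qed

lemma alg1_step:
  assumes A1: "assumption1 f gradf L psi"
    and run: "alg1_run f gradf psi \<beta> \<gamma> \<eta> x H d \<alpha>"
    and px: "psi (x k) = ereal p"
    and sig: "0 < \<sigma>" "\<sigma> \<le> M" and lw: "\<forall>k. loewner_between \<sigma> (H k) M"
  obtains p' where "psi (x (Suc k)) = ereal p'"
   "f (x (Suc k)) + p' \<le> f (x k) + p - \<alpha> k * (\<gamma> * (1 - \<eta>) / (2 * max M 1)) * (norm (Gmap gradf psi (x k)))^2"
   "min 1 (\<beta> * (2 * (1 - \<gamma>) * \<sigma> / (L * (1 + sqrt \<eta>)))) \<le> \<alpha> k" "0 < \<alpha> k"
proof -
  have pars: "0 < \<beta>" "\<beta> < 1" "0 < \<gamma>" "\<gamma> < 1" "0 \<le> \<eta>" "\<eta> < 1"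
    and inx: "inexact \<eta> gradf psi (x k) (H k) (d k)"
    and ex: "\<exists>i::nat. \<alpha> k = \<beta> ^ i \<and> armijo f gradf psi \<gamma> (x k) (d k) (\<beta> ^ i) \<and>
                 (\<forall>j<i. \<not> armijo f gradf psi \<gamma> (x k) (d k) (\<beta> ^ j))"
    and xs: "x (Suc k) = x k + \<alpha> k *\<^sub>R d k"
    using run unfolding alg1_run_def by blast+
  obtain i where ai: "\<alpha> k = \<beta> ^ i" and arm: "armijo f gradf psi \<gamma> (x k) (d k) (\<beta> ^ i)"
    and fail: "\<forall>j<i. \<not> armijo f gradf psi \<gamma> (x k) (d k) (\<beta> ^ j)" using ex by blast
  have low: "\<forall>v. \<sigma> * (v \<bullet> v) \<le> v \<bullet> (H k *v v)" and up: "\<forall>v. v \<bullet> (H k *v v) \<le> M * (v \<bullet> v)"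
    using lw by (auto simp: loewner_between_def)
  have Mp: "0 < M" using sig by simp
  obtain pd qs where pd: "psi (x k + d k) = ereal pd" and qs: "Qstar gradf psi (x k) (H k) = ereal qs"
    and h: "gradf (x k) \<bullet> d k + 1/2 * (d k \<bullet> (H k *v d k)) + pd - p \<le> (1 - \<eta>) * qs"
    and cd: "\<sigma> * (d k \<bullet> d k) \<le> d k \<bullet> (H k *v d k)"
    using neg_delta_bound[OF A1 px inx pars(5,6) low] sig by (metis less_imp_le)
  define Dl where "Dl = gradf (x k) \<bullet> d k + pd - p"
  define n where "n = (norm (Gmap gradf psi (x k)))^2"
  define mx where "mx = max M 1"
  have mx: "0 < mx" by (simp add: mx_def)
  have Gb: "n \<le> - qs * (2 * mx)" using G_bound[OF A1 px qs up Mp] by (simp add: n_def mx_def)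
  have apos: "0 < \<alpha> k" using ai pars by simp
  have "0 \<le> d k \<bullet> (H k *v d k)" using cd sig by (metis inner_ge_zero mult_nonneg_nonneg order_trans less_imp_le)
  hence Dq: "Dl \<le> (1 - \<eta>) * qs" using h by (simp add: Dl_def)
  have qsb: "qs \<le> - n / (2 * mx)" using Gb mx by (simp add: field_simps)
  have "(1 - \<eta>) * qs \<le> (1 - \<eta>) * (- n / (2 * mx))" using qsb pars by (intro mult_left_mono) auto
  with Dq have Dn: "Dl \<le> - ((1 - \<eta>) * n / (2 * mx))" by simp
  have armr: "Fobj f psi (x (Suc k)) \<le> ereal (f (x k) + p + \<alpha> k * \<gamma> * Dl)"
    using arm ai px pd xs unfolding armijo_def Fobj_def Delta_def Dl_def by simp
  have nm: "psi (x (Suc k)) \<noteq> -\<infinity>" by (rule A1_psi_nm[OF A1])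
  obtain p' where p': "psi (x (Suc k)) = ereal p'" using armr nm
    by (cases "psi (x (Suc k))") (auto simp: Fobj_def)
  have r1: "f (x (Suc k)) + p' \<le> f (x k) + p + \<alpha> k * \<gamma> * Dl" using armr p' by (simp add: Fobj_def)
  have "\<alpha> k * \<gamma> * Dl \<le> \<alpha> k * \<gamma> * (- ((1 - \<eta>) * n / (2 * mx)))"
    using Dn apos pars by (intro mult_left_mono) auto
  also have "\<dots> = - (\<alpha> k * (\<gamma> * (1 - \<eta>) / (2 * mx)) * n)" by simp
  finally have r2: "f (x (Suc k)) + p' \<le> f (x k) + p - \<alpha> k * (\<gamma> * (1 - \<eta>) / (2 * max M 1)) * (norm (Gmap gradf psi (x k)))^2"
    using r1 by (simp add: n_def mx_def)
  define T where "T = 2 * (1 - \<gamma>) * \<sigma> / (L * (1 + sqrt \<eta>))"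
  have "min 1 (\<beta> * T) \<le> \<alpha> k"
  proof (cases i)
    case 0 thus ?thesis using ai by simp
  next
    case (Suc j)
    have bj: "0 < \<beta> ^ j" "\<beta> ^ j \<le> 1" using pars by (auto simp: power_le_one)
    have "\<not> armijo f gradf psi \<gamma> (x k) (d k) (\<beta> ^ j)" using fail Suc by simp
    hence "\<not> \<beta> ^ j \<le> T"
      using armijo_suff[OF A1 px inx pars(5,6) low sig(1) pars(3,4) bj] unfolding T_def by blast
    hence "\<beta> * T \<le> \<beta> * \<beta> ^ j" using pars by (intro mult_left_mono) auto
    thus ?thesis using ai Suc by simp
  qed
  thus ?thesis using that[OF p' r2] apos by (simp add: T_def)
qed

lemma alg2_step:
  assumes A1: "assumption1 f gradf L psi"
    and run: "alg2_run v f gradf psi \<beta> \<gamma> \<eta> x H0 nb D"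
    and px: "psi (x k) = ereal p"
    and up: "\<forall>w. w \<bullet> (trialH v \<beta> (H0 k) (nb k) *v w) \<le> Mt * (w \<bullet> w)" and Mt: "0 < Mt"
  obtains p' where "psi (x (Suc k)) = ereal p'"
   "f (x (Suc k)) + p' \<le> f (x k) + p - 1 * (\<gamma> * (1 - \<eta>) / (2 * max Mt 1)) * (norm (Gmap gradf psi (x k)))^2"
proof -
  define Hf where "Hf = trialH v \<beta> (H0 k) (nb k)"
  define dd where "dd = D k (nb k)"
  have pars: "0 < \<beta>" "\<beta> < 1" "0 < \<gamma>" "\<gamma> \<le> 1" "0 \<le> \<eta>" "\<eta> < 1"
    and inx: "inexact \<eta> gradf psi (x k) Hf dd"
    and acc: "accept2 f gradf psi \<gamma> (x k) Hf dd"
    and xs: "x (Suc k) = x k + dd"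
    using run unfolding alg2_run_def Hf_def dd_def by auto
  obtain qs pd where qs: "Qstar gradf psi (x k) Hf = ereal qs" and pd: "psi (x k + dd) = ereal pd"
    and h: "gradf (x k) \<bullet> dd + 1/2 * (dd \<bullet> (Hf *v dd)) + pd - p \<le> (1 - \<eta>) * qs"
    using inexact_facts[OF A1 px inx pars(5,6)] by blast
  define Qr where "Qr = gradf (x k) \<bullet> dd + 1/2 * (dd \<bullet> (Hf *v dd)) + pd - p"
  define n where "n = (norm (Gmap gradf psi (x k)))^2"
  define mx where "mx = max Mt 1"
  have mx: "0 < mx" by (simp add: mx_def)
  have Gb: "n \<le> - qs * (2 * mx)" using G_bound[OF A1 px qs up[folded Hf_def] Mt] by (simp add: n_def mx_def)
  have qsb: "qs \<le> - n / (2 * mx)" using Gb mx by (simp add: field_simps)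
  have "(1 - \<eta>) * qs \<le> (1 - \<eta>) * (- n / (2 * mx))" using qsb pars by (intro mult_left_mono) auto
  with h have Qn: "Qr \<le> - ((1 - \<eta>) * n / (2 * mx))" by (simp add: Qr_def)
  have Qe: "Qm gradf psi (x k) Hf dd = ereal Qr" using Qm_real[OF px pd] by (simp add: Qr_def)
  have ar: "- (\<gamma> * Qr) \<le> f (x k) + p - (f (x k + dd) + pd)"
    using acc Qe px pd unfolding accept2_def Fobj_def by simp
  have "\<gamma> * Qr \<le> \<gamma> * (- ((1 - \<eta>) * n / (2 * mx)))" using Qn pars by (intro mult_left_mono) auto
  hence r: "f (x k + dd) + pd \<le> f (x k) + p - 1 * (\<gamma> * (1 - \<eta>) / (2 * mx)) * n" using ar by simp
  show ?thesis using that[of pd] r pd xs by (simp add: n_def mx_def)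
qed

lemma sum_bound:
  fixes Fr a n :: "nat \<Rightarrow> real"
  assumes step: "\<And>t. Fr (Suc t) \<le> Fr t - a t * K * n t" and low: "\<And>t. fs \<le> Fr t" and K: "0 < K"
    and apos: "\<And>t. 0 < a t" and n0: "\<And>t. 0 \<le> n t"
  shows "Min (n ` {..k}) * (real k + 1) * Min (a ` {..k}) * K \<le> Fr 0 - fs"
proof -
  have tel: "(\<Sum>t\<le>j. a t * K * n t) \<le> Fr 0 - Fr (Suc j)" for j
  proof (induction j)
    case 0 thus ?case using step[of 0] by simp
  next
    case (Suc j) thus ?case using step[of "Suc j"] by simp
  qed
  define am where "am = Min (a ` {..k})"
  define nm where "nm = Min (n ` {..k})"
  have amin: "am \<le> a t" "nm \<le> n t" if "t \<le> k" for t using that by (auto simp: am_def nm_def)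
  have "am \<in> a ` {..k}" unfolding am_def by (rule Min_in) auto
  then obtain t0 where "t0 \<le> k" "am = a t0" by auto
  hence am0: "0 < am" using apos by simp
  have "nm \<in> n ` {..k}" unfolding nm_def by (rule Min_in) auto
  then obtain t1 where "t1 \<le> k" "nm = n t1" by auto
  hence nm0: "0 \<le> nm" using n0 by simp
  have "(\<Sum>t\<le>k. am * K * nm) \<le> (\<Sum>t\<le>k. a t * K * n t)"
  proof (rule sum_mono)
    fix t assume "t \<in> {..k}"
    hence "am \<le> a t" "nm \<le> n t" using amin by auto
    thus "am * K * nm \<le> a t * K * n t" using am0 K nm0
      by (intro mult_mono) auto
  qed
  also have "\<dots> \<le> Fr 0 - fs" using tel[of k] low[of "Suc k"] by simp
  finally show ?thesis by (simp add: am_def[symmetric] nm_def[symmetric] algebra_simps)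
qed




lemma scaled_quad: "w \<bullet> ((c *\<^sub>R A) *v w) = c * (w \<bullet> (A *v w))"
  for A :: "real^'n^'n"
  by (simp add: scaleR_matrix_vector_assoc[symmetric])

lemma plusI_quad: "w \<bullet> ((A + c *\<^sub>R mat 1) *v w) = w \<bullet> (A *v w) + c * (w \<bullet> w)"
  for A :: "real^'n^'n"
  by (simp add: matrix_vector_mult_add_rdistrib scaleR_matrix_vector_assoc[symmetric] inner_add_right)

lemma var1_bound:
  assumes A1: "assumption1 f gradf L psi" and px: "psi (x k) = ereal p"
    and run: "alg2_run 1 f gradf psi \<beta> \<gamma> \<eta> x H0 nb D"
    and lw: "loewner_between m0 (H0 k) M0" and m0: "0 < m0" "m0 \<le> M0"
  shows "\<forall>w. w \<bullet> (trialH 1 \<beta> (H0 k) (nb k) *v w) \<le> tildeM1 L \<beta> \<gamma> m0 M0 \<eta> * (w \<bullet> w)"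
proof
  fix w :: "real^'a"
  have pars: "0 < \<beta>" "\<beta> < 1" "0 < \<gamma>" "\<gamma> \<le> 1" "0 \<le> \<eta>" "\<eta> < 1"
    and inx: "\<forall>j \<le> nb k. inexact \<eta> gradf psi (x k) (trialH 1 \<beta> (H0 k) j) (D k j)"
    and fl: "\<forall>j < nb k. \<not> accept2 f gradf psi \<gamma> (x k) (trialH 1 \<beta> (H0 k) j) (D k j)"
    using run unfolding alg2_run_def by blast+
  have lo: "\<And>v. m0 * (v \<bullet> v) \<le> v \<bullet> (H0 k *v v)" and hi: "\<And>v. v \<bullet> (H0 k *v v) \<le> M0 * (v \<bullet> v)"
    using lw by (auto simp: loewner_between_def)
  define cc where "cc = L * (1 + sqrt \<eta>) / (2 - \<gamma> * (1 - sqrt \<eta>))"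
  define X where "X = L * (1 + sqrt \<eta>) / (\<beta> * (2 - \<gamma> * (1 - sqrt \<eta>)) * m0)"
  have tM: "tildeM1 L \<beta> \<gamma> m0 M0 \<eta> = M0 * max 1 X" by (simp add: tildeM1_def X_def)
  have M0p: "0 < M0" using m0 by simp
  have ww: "0 \<le> w \<bullet> w" by simp
  show "w \<bullet> (trialH 1 \<beta> (H0 k) (nb k) *v w) \<le> tildeM1 L \<beta> \<gamma> m0 M0 \<eta> * (w \<bullet> w)"
  proof (cases "nb k")
    case 0
    have "w \<bullet> (trialH 1 \<beta> (H0 k) (nb k) *v w) = w \<bullet> (H0 k *v w)" using 0 by (simp add: trialH_def)
    also have "\<dots> \<le> M0 * (w \<bullet> w)" by (rule hi)
    also have "\<dots> \<le> M0 * max 1 X * (w \<bullet> w)"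
      using M0p ww by (intro mult_right_mono) (auto simp: le_max_iff_disj)
    finally show ?thesis using tM by simp
  next
    case (Suc j)
    have bj: "0 < \<beta> ^ j" using pars by simp
    have lt: "m0 / \<beta> ^ j < cc"
    proof (rule ccontr)
      assume "\<not> ?thesis"
      hence ge: "cc \<le> m0 / \<beta> ^ j" by simp
      have low: "\<forall>v. m0 / \<beta> ^ j * (v \<bullet> v) \<le> v \<bullet> (trialH 1 \<beta> (H0 k) j *v v)"
      proof
        fix v :: "real^'a"
        have "m0 / \<beta> ^ j * (v \<bullet> v) = (1 / \<beta> ^ j) * (m0 * (v \<bullet> v))" by simp
        also have "\<dots> \<le> (1 / \<beta> ^ j) * (v \<bullet> (H0 k *v v))" using lo bj by (intro mult_left_mono) auto
        finally show "m0 / \<beta> ^ j * (v \<bullet> v) \<le> v \<bullet> (trialH 1 \<beta> (H0 k) j *v v)"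
          by (simp add: trialH_def scaled_quad)
      qed
      have "accept2 f gradf psi \<gamma> (x k) (trialH 1 \<beta> (H0 k) j) (D k j)"
        using accept_suff[OF A1 px _ pars(5,6) low pars(3,4)] inx Suc ge unfolding cc_def by auto
      thus False using fl Suc by auto
    qed
    have "w \<bullet> (trialH 1 \<beta> (H0 k) (nb k) *v w) = (1 / \<beta> ^ Suc j) * (w \<bullet> (H0 k *v w))"
      using Suc by (simp add: trialH_def scaled_quad)
    also have "\<dots> \<le> (1 / \<beta> ^ Suc j) * (M0 * (w \<bullet> w))" using hi pars by (intro mult_left_mono) auto
    also have "\<dots> = M0 * ((m0 / \<beta> ^ j) / (\<beta> * m0)) * (w \<bullet> w)" using m0 pars by (simp add: field_simps)
    also have "\<dots> \<le> M0 * (cc / (\<beta> * m0)) * (w \<bullet> w)"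
      using lt M0p m0 pars ww by (intro mult_right_mono mult_left_mono divide_right_mono) auto
    also have "cc / (\<beta> * m0) = X" by (simp add: cc_def X_def field_simps)
    also have "M0 * X * (w \<bullet> w) \<le> M0 * max 1 X * (w \<bullet> w)"
      using M0p ww by (intro mult_right_mono mult_left_mono) auto
    finally show ?thesis using tM by simp
  qed
qed

lemma var2_bound:
  assumes A1: "assumption1 f gradf L psi" and px: "psi (x k) = ereal p"
    and run: "alg2_run 2 f gradf psi \<beta> \<gamma> \<eta> x H0 nb D"
    and lw: "loewner_between m0 (H0 k) M0" and m0: "0 < m0" "m0 \<le> M0"
  shows "\<forall>w. w \<bullet> (trialH 2 \<beta> (H0 k) (nb k) *v w) \<le> tildeM2 L \<beta> \<gamma> m0 M0 \<eta> * (w \<bullet> w)"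
proof
  fix w :: "real^'a"
  have pars: "0 < \<beta>" "\<beta> < 1" "0 < \<gamma>" "\<gamma> \<le> 1" "0 \<le> \<eta>" "\<eta> < 1"
    and inx: "\<forall>j \<le> nb k. inexact \<eta> gradf psi (x k) (trialH 2 \<beta> (H0 k) j) (D k j)"
    and fl: "\<forall>j < nb k. \<not> accept2 f gradf psi \<gamma> (x k) (trialH 2 \<beta> (H0 k) j) (D k j)"
    using run unfolding alg2_run_def by blast+
  have lo: "\<And>v. m0 * (v \<bullet> v) \<le> v \<bullet> (H0 k *v v)" and hi: "\<And>v. v \<bullet> (H0 k *v v) \<le> M0 * (v \<bullet> v)"
    using lw by (auto simp: loewner_between_def)
  define cc where "cc = L * (1 + sqrt \<eta>) / (2 - \<gamma> * (1 - sqrt \<eta>))"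
  define Y where "Y = (1 / \<beta>) * (cc - m0)"
  have tM: "tildeM2 L \<beta> \<gamma> m0 M0 \<eta> = M0 + max 1 Y" by (simp add: tildeM2_def Y_def cc_def)
  have ww: "0 \<le> w \<bullet> w" by simp
  have tq: "v \<bullet> (trialH 2 \<beta> (H0 k) (Suc j) *v v) = v \<bullet> (H0 k *v v) + (1 / \<beta> ^ j) * (v \<bullet> v)" for j :: nat and v :: "real^'a"
    by (simp add: trialH_def plusI_quad)
  show "w \<bullet> (trialH 2 \<beta> (H0 k) (nb k) *v w) \<le> tildeM2 L \<beta> \<gamma> m0 M0 \<eta> * (w \<bullet> w)"
  proof (cases "nb k")
    case 0
    have "w \<bullet> (trialH 2 \<beta> (H0 k) (nb k) *v w) = w \<bullet> (H0 k *v w)" using 0 by (simp add: trialH_def)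
    also have "\<dots> \<le> M0 * (w \<bullet> w)" by (rule hi)
    also have "\<dots> \<le> (M0 + max 1 Y) * (w \<bullet> w)" using ww by (intro mult_right_mono) auto
    finally show ?thesis using tM by simp
  next
    case (Suc j)
    have "w \<bullet> (trialH 2 \<beta> (H0 k) (nb k) *v w) \<le> M0 * (w \<bullet> w) + (1 / \<beta> ^ j) * (w \<bullet> w)"
      using Suc tq[where j=j and v=w] hi[of w] by simp
    also have "\<dots> \<le> (M0 + max 1 Y) * (w \<bullet> w)"
    proof (cases j)
      case 0
      have "1 * (w \<bullet> w) \<le> max 1 Y * (w \<bullet> w)" using ww by (intro mult_right_mono) auto
      thus ?thesis using 0 by (simp add: distrib_right)
    next
      case (Suc i)
      have bi: "0 < \<beta> ^ i" using pars by simp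
      have lt: "m0 + 1 / \<beta> ^ i < cc"
      proof (rule ccontr)
        assume "\<not> ?thesis"
        hence ge: "cc \<le> m0 + 1 / \<beta> ^ i" by simp
        have low: "\<forall>v. (m0 + 1 / \<beta> ^ i) * (v \<bullet> v) \<le> v \<bullet> (trialH 2 \<beta> (H0 k) (Suc i) *v v)"
          using lo by (simp add: tq distrib_right)
        have "accept2 f gradf psi \<gamma> (x k) (trialH 2 \<beta> (H0 k) (Suc i)) (D k (Suc i))"
          using accept_suff[OF A1 px _ pars(5,6) low pars(3,4)] inx \<open>nb k = Suc j\<close> Suc ge
          unfolding cc_def by auto
        thus False using fl \<open>nb k = Suc j\<close> Suc by auto
      qed
      have "1 / \<beta> ^ j = (1 / \<beta>) * (1 / \<beta> ^ i)" using Suc by simp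
      also have "\<dots> \<le> (1 / \<beta>) * (cc - m0)" using lt pars by (intro mult_left_mono) auto
      finally have "1 / \<beta> ^ j \<le> max 1 Y" by (simp add: Y_def)
      hence "(1 / \<beta> ^ j) * (w \<bullet> w) \<le> max 1 Y * (w \<bullet> w)" using ww by (intro mult_right_mono) auto
      thus ?thesis by (simp add: distrib_right)
    qed
    finally show ?thesis using tM by simp
  qed
qed




lemma step_inv_bound:
  fixes \<eta> \<gamma> \<beta> \<sigma> L a :: real
  assumes "0 \<le> \<eta>" "\<eta> < 1" "0 < \<gamma>" "\<gamma> < 1" "0 < \<beta>" "0 < \<sigma>" "0 < L" "0 < a"
    and m: "min 1 (\<beta> * (2 * (1 - \<gamma>) * \<sigma> / (L * (1 + sqrt \<eta>)))) \<le> a"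
  shows "1 / ((1 - \<eta>) * a) \<le> max (1 / (1 - \<eta>)) (L / (2 * (1 - sqrt \<eta>) * (1 - \<gamma>) * \<sigma> * \<beta>))"
proof -
  define e where "e = sqrt \<eta>"
  have e0: "0 \<le> e" and e1: "e < 1" using assms by (auto simp: e_def real_sqrt_lt_1_iff)
  have ee: "1 - \<eta> = (1 - e) * (1 + e)" using assms by (simp add: e_def algebra_simps)
  have eta1: "0 < 1 - \<eta>" using assms by simp
  show ?thesis
  proof (cases "1 \<le> a")
    case True
    have "1 / ((1 - \<eta>) * a) \<le> 1 / ((1 - \<eta>) * 1)"
      using True eta1 by (intro divide_left_mono mult_left_mono mult_pos_pos) auto
    thus ?thesis by simp
  next
    case False
    define T where "T = \<beta> * (2 * (1 - \<gamma>) * \<sigma> / (L * (1 + e)))"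
    have Tp: "0 < T" using assms e0 by (simp add: T_def)
    have Ta: "T \<le> a" using m False by (simp add: T_def e_def min_def split: if_splits)
    have "1 / ((1 - \<eta>) * a) \<le> 1 / ((1 - \<eta>) * T)"
      using Ta Tp eta1 by (intro divide_left_mono mult_left_mono mult_pos_pos) auto
    also have "\<dots> = L / (2 * (1 - e) * (1 - \<gamma>) * \<sigma> * \<beta>)"
    proof -
      have n1: "1 - e \<noteq> 0" "1 + e \<noteq> 0" "1 - \<gamma> \<noteq> 0" "L \<noteq> 0" "\<beta> \<noteq> 0" "\<sigma> \<noteq> 0"
        using assms e0 e1 by auto
      have "1 / ((1 - e) * (1 + e) * T) = L / (2 * (1 - e) * (1 - \<gamma>) * \<sigma> * \<beta>)"
        unfolding T_def using n1 by (simp add: divide_simps) (simp add: algebra_simps)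
      thus ?thesis unfolding ee .
    qed
    finally show ?thesis by (simp add: e_def)
  qed
qed

lemma alg1_main:
  fixes f :: "real^'n \<Rightarrow> real" and gradf :: "real^'n \<Rightarrow> real^'n"
    and psi :: "real^'n \<Rightarrow> ereal" and L \<eta> :: real
  assumes A1: "assumption1 f gradf L psi"
    and run: "alg1_run f gradf psi \<beta> \<gamma> \<eta> x H d \<alpha>" and px0: "psi (x 0) \<noteq> \<infinity>"
    and sig: "0 < \<sigma>" "\<sigma> \<le> M" and lw: "\<forall>k. loewner_between \<sigma> (H k) M"
  shows "ereal (minGsq gradf psi x k)
              \<le> (Fobj f psi (x 0) - Fstar f psi) *
                 ereal (1 / (\<gamma> * (k + 1)) * cconst \<sigma> M
                        / (2 * (1 - \<eta>) * \<sigma> * Min (\<alpha> ` {..k})))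
          \<and> (Fobj f psi (x 0) - Fstar f psi) *
                 ereal (1 / (\<gamma> * (k + 1)) * cconst \<sigma> M
                        / (2 * (1 - \<eta>) * \<sigma> * Min (\<alpha> ` {..k})))
              \<le> (Fobj f psi (x 0) - Fstar f psi) *
                 ereal (1 / (\<gamma> * (k + 1)) * cconst \<sigma> M / (2 * \<sigma>)
                        * max (1 / (1 - \<eta>)) (L / (2 * (1 - sqrt \<eta>) * (1 - \<gamma>) * \<sigma> * \<beta>)))"
proof -
  have pars: "0 < \<beta>" "\<beta> < 1" "0 < \<gamma>" "\<gamma> < 1" "0 \<le> \<eta>" "\<eta> < 1"
    using run unfolding alg1_run_def by blast+
  have Lp: "0 < L" using A1_L[OF A1] .
  obtain fs where fs: "Fstar f psi = ereal fs" and fsl: "\<And>y. ereal fs \<le> Fobj f psi y"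
    using Fstar_real[OF A1 px0] by blast
  have fin: "\<exists>p. psi (x t) = ereal p" for t
  proof (induction t)
    case 0 thus ?case using px0 A1_psi_nm[OF A1, of "x 0"] by (cases "psi (x 0)") auto
  next
    case (Suc t)
    then obtain p where "psi (x t) = ereal p" by blast
    from alg1_step[OF A1 run this sig lw] show ?case by metis
  qed
  define p where "p t = real_of_ereal (psi (x t))" for t
  have pe: "psi (x t) = ereal (p t)" for t using fin[of t] by (auto simp: p_def)
  define Fr where "Fr t = f (x t) + p t" for t
  define K where "K = \<gamma> * (1 - \<eta>) / (2 * max M 1)"
  define n where "n t = (norm (Gmap gradf psi (x t)))^2" for t
  define T where "T = min 1 (\<beta> * (2 * (1 - \<gamma>) * \<sigma> / (L * (1 + sqrt \<eta>))))"
  have Kp: "0 < K" using pars by (simp add: K_def)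
  have st: "Fr (Suc t) \<le> Fr t - \<alpha> t * K * n t \<and> T \<le> \<alpha> t \<and> 0 < \<alpha> t" for t
  proof -
    obtain p' where "psi (x (Suc t)) = ereal p'"
      "f (x (Suc t)) + p' \<le> f (x t) + p t - \<alpha> t * (\<gamma> * (1 - \<eta>) / (2 * max M 1)) * (norm (Gmap gradf psi (x t)))^2"
      "min 1 (\<beta> * (2 * (1 - \<gamma>) * \<sigma> / (L * (1 + sqrt \<eta>)))) \<le> \<alpha> t" "0 < \<alpha> t"
      using alg1_step[OF A1 run pe[of t] sig lw] by blast
    thus ?thesis using pe[of "Suc t"] by (simp add: Fr_def K_def n_def T_def)
  qed
  have low: "fs \<le> Fr t" for t using fsl[of "x t"] pe[of t] by (simp add: Fr_def Fobj_def)
  have sb: "Min (n ` {..k}) * (real k + 1) * Min (\<alpha> ` {..k}) * K \<le> Fr 0 - fs"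
    by (rule sum_bound) (use st low Kp in \<open>auto simp: n_def\<close>)
  define nm where "nm = Min (n ` {..k})"
  define am where "am = Min (\<alpha> ` {..k})"
  have "am \<in> \<alpha> ` {..k}" unfolding am_def by (rule Min_in) auto
  then obtain t0 where am: "am = \<alpha> t0" by auto
  have am0: "0 < am" and amT: "T \<le> am" using st[of t0] am by auto
  have mg: "minGsq gradf psi x k = nm" by (simp add: minGsq_def nm_def n_def)
  have F0: "Fobj f psi (x 0) - Fstar f psi = ereal (Fr 0 - fs)"
    using pe[of 0] fs by (simp add: Fobj_def Fr_def)
  have A0: "0 \<le> Fr 0 - fs" using low[of 0] by simp
  define cc where "cc = cconst \<sigma> M"
  have ccb: "4 * \<sigma> * max M 1 \<le> cc" using cconst_ge[OF sig] by (simp add: cc_def)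
  define Q where "Q = 1 / (\<gamma> * (real k + 1) * (1 - \<eta>) * am)"
  have Qp: "0 < Q" using pars am0 by (simp add: Q_def)
  have P: "nm * ((real k + 1) * am * K) \<le> Fr 0 - fs" using sb by (simp add: nm_def am_def mult.assoc)
  have Pp: "0 < (real k + 1) * am * K" using am0 Kp by simp
  have "nm \<le> (Fr 0 - fs) / ((real k + 1) * am * K)" using P Pp by (simp add: pos_le_divide_eq)
  also have "\<dots> = (Fr 0 - fs) * ((2 * max M 1) * Q)"
    using pars am0 by (simp add: K_def Q_def field_simps)
  also have "\<dots> \<le> (Fr 0 - fs) * ((cc / (2 * \<sigma>)) * Q)"
  proof -
    have "2 * max M 1 \<le> cc / (2 * \<sigma>)" using ccb sig by (simp add: pos_le_divide_eq mult.commute mult.left_commute)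
    thus ?thesis using A0 Qp by (intro mult_left_mono mult_right_mono) auto
  qed
  also have "(cc / (2 * \<sigma>)) * Q = 1 / (\<gamma> * (real k + 1)) * cc / (2 * (1 - \<eta>) * \<sigma> * am)"
    by (simp add: Q_def field_simps)
  finally have i1: "nm \<le> (Fr 0 - fs) * (1 / (\<gamma> * (real k + 1)) * cc / (2 * (1 - \<eta>) * \<sigma> * am))" .
  have cc0: "0 \<le> cc" by (simp add: cc_def cconst_def)
  have inv: "1 / ((1 - \<eta>) * am) \<le> max (1 / (1 - \<eta>)) (L / (2 * (1 - sqrt \<eta>) * (1 - \<gamma>) * \<sigma> * \<beta>))"
    using step_inv_bound[OF pars(5,6,3,4,1) sig(1) Lp am0] amT by (simp add: T_def)
  have "1 / (\<gamma> * (real k + 1)) * cc / (2 * (1 - \<eta>) * \<sigma> * am)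
      = (1 / (\<gamma> * (real k + 1)) * cc / (2 * \<sigma>)) * (1 / ((1 - \<eta>) * am))" by simp
  also have "\<dots> \<le> (1 / (\<gamma> * (real k + 1)) * cc / (2 * \<sigma>)) * max (1 / (1 - \<eta>)) (L / (2 * (1 - sqrt \<eta>) * (1 - \<gamma>) * \<sigma> * \<beta>))"
    using inv cc0 pars sig by (intro mult_left_mono) auto
  finally have i2: "(Fr 0 - fs) * (1 / (\<gamma> * (real k + 1)) * cc / (2 * (1 - \<eta>) * \<sigma> * am))
     \<le> (Fr 0 - fs) * (1 / (\<gamma> * (real k + 1)) * cc / (2 * \<sigma>) * max (1 / (1 - \<eta>)) (L / (2 * (1 - sqrt \<eta>) * (1 - \<gamma>) * \<sigma> * \<beta>)))"
    using A0 by (intro mult_left_mono) auto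
  show ?thesis using i1 i2 unfolding F0 mg am_def[symmetric] cc_def[symmetric] by (simp add: add.commute)
qed

lemma alg2_main:
  fixes f :: "real^'n \<Rightarrow> real" and gradf :: "real^'n \<Rightarrow> real^'n"
    and psi :: "real^'n \<Rightarrow> ereal" and L \<eta> :: real
  assumes A1: "assumption1 f gradf L psi"
    and run: "alg2_run v f gradf psi \<beta> \<gamma> \<eta> x H0 nb D" and px0: "psi (x 0) \<noteq> \<infinity>"
    and up: "\<And>k p. psi (x k) = ereal p \<Longrightarrow> \<forall>w. w \<bullet> (trialH v \<beta> (H0 k) (nb k) *v w) \<le> Mt * (w \<bullet> w)"
    and m0: "0 < m0" "m0 \<le> Mt"
  shows "ereal (minGsq gradf psi x k)
              \<le> (Fobj f psi (x 0) - Fstar f psi) *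
                 ereal (1 / (\<gamma> * (k + 1)) * cconst m0 Mt / (2 * (1 - \<eta>) * m0))"
proof -
  have pars: "0 < \<beta>" "\<beta> < 1" "0 < \<gamma>" "\<gamma> \<le> 1" "0 \<le> \<eta>" "\<eta> < 1"
    using run unfolding alg2_run_def by blast+
  have Mt: "0 < Mt" using m0 by simp
  obtain fs where fs: "Fstar f psi = ereal fs" and fsl: "\<And>y. ereal fs \<le> Fobj f psi y"
    using Fstar_real[OF A1 px0] by blast
  have fin: "\<exists>p. psi (x t) = ereal p" for t
  proof (induction t)
    case 0 thus ?case using px0 A1_psi_nm[OF A1, of "x 0"] by (cases "psi (x 0)") auto
  next
    case (Suc t)
    then obtain p where pt: "psi (x t) = ereal p" by blast
    from alg2_step[OF A1 run pt up[OF pt] Mt] show ?case by metis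
  qed
  define p where "p t = real_of_ereal (psi (x t))" for t
  have pe: "psi (x t) = ereal (p t)" for t using fin[of t] by (auto simp: p_def)
  define Fr where "Fr t = f (x t) + p t" for t
  define K where "K = \<gamma> * (1 - \<eta>) / (2 * max Mt 1)"
  define n where "n t = (norm (Gmap gradf psi (x t)))^2" for t
  have Kp: "0 < K" using pars by (simp add: K_def)
  have st: "Fr (Suc t) \<le> Fr t - (\<lambda>_. 1::real) t * K * n t" for t
  proof -
    obtain p' where "psi (x (Suc t)) = ereal p'"
      "f (x (Suc t)) + p' \<le> f (x t) + p t - 1 * (\<gamma> * (1 - \<eta>) / (2 * max Mt 1)) * (norm (Gmap gradf psi (x t)))^2"
      using alg2_step[OF A1 run pe[of t] up[OF pe[of t]] Mt] by blast
    thus ?thesis using pe[of "Suc t"] by (simp add: Fr_def K_def n_def)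
  qed
  have low: "fs \<le> Fr t" for t using fsl[of "x t"] pe[of t] by (simp add: Fr_def Fobj_def)
  have sb: "Min (n ` {..k}) * (real k + 1) * Min ((\<lambda>_. 1::real) ` {..k}) * K \<le> Fr 0 - fs"
    by (rule sum_bound[of Fr "\<lambda>_. 1" K n fs]) (use st low Kp in \<open>auto simp: n_def\<close>)
  have one: "(\<lambda>_. 1::real) ` {..k} = {1}" by auto
  define nm where "nm = Min (n ` {..k})"
  have mg: "minGsq gradf psi x k = nm" by (simp add: minGsq_def nm_def n_def)
  have F0: "Fobj f psi (x 0) - Fstar f psi = ereal (Fr 0 - fs)"
    using pe[of 0] fs by (simp add: Fobj_def Fr_def)
  have A0: "0 \<le> Fr 0 - fs" using low[of 0] by simp
  define cc where "cc = cconst m0 Mt"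
  have ccb: "4 * m0 * max Mt 1 \<le> cc" using cconst_ge[OF m0] by (simp add: cc_def)
  define Q where "Q = 1 / (\<gamma> * (real k + 1) * (1 - \<eta>))"
  have Qp: "0 < Q" using pars by (simp add: Q_def)
  have P: "nm * ((real k + 1) * K) \<le> Fr 0 - fs" using sb by (simp add: nm_def one mult.assoc)
  have Pp: "0 < (real k + 1) * K" using Kp by simp
  have "nm \<le> (Fr 0 - fs) / ((real k + 1) * K)" using P Pp by (simp add: pos_le_divide_eq)
  also have "\<dots> = (Fr 0 - fs) * ((2 * max Mt 1) * Q)"
    using pars by (simp add: K_def Q_def field_simps)
  also have "\<dots> \<le> (Fr 0 - fs) * ((cc / (2 * m0)) * Q)"
  proof -
    have "2 * max Mt 1 \<le> cc / (2 * m0)" using ccb m0 by (simp add: pos_le_divide_eq mult.commute mult.left_commute)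
    thus ?thesis using A0 Qp by (intro mult_left_mono mult_right_mono) auto
  qed
  also have "(cc / (2 * m0)) * Q = 1 / (\<gamma> * (real k + 1)) * cc / (2 * (1 - \<eta>) * m0)"
    by (simp add: Q_def field_simps)
  finally have i1: "nm \<le> (Fr 0 - fs) * (1 / (\<gamma> * (real k + 1)) * cc / (2 * (1 - \<eta>) * m0))" .
  show ?thesis using i1 unfolding F0 mg cc_def[symmetric] by (simp add: add.commute)
qed


theorem corollary3:
  fixes f :: "real^'n \<Rightarrow> real" and gradf :: "real^'n \<Rightarrow> real^'n"
    and psi :: "real^'n \<Rightarrow> ereal" and L \<eta> :: real
  assumes A1: "assumption1 f gradf L psi"
    and eta: "0 \<le> \<eta>" "\<eta> < 1"
  shows
   "(\<forall>\<beta> \<gamma> x H d \<alpha> \<sigma> M.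
       alg1_run f gradf psi \<beta> \<gamma> \<eta> x H d \<alpha> \<and> psi (x 0) \<noteq> \<infinity> \<and>
       0 < \<sigma> \<and> \<sigma> \<le> M \<and> (\<forall>k. loewner_between \<sigma> (H k) M) \<longrightarrow>
       (\<forall>k. ereal (minGsq gradf psi x k)
              \<le> (Fobj f psi (x 0) - Fstar f psi) *
                 ereal (1 / (\<gamma> * (k + 1)) * cconst \<sigma> M
                        / (2 * (1 - \<eta>) * \<sigma> * Min (\<alpha> ` {..k})))
          \<and> (Fobj f psi (x 0) - Fstar f psi) *
                 ereal (1 / (\<gamma> * (k + 1)) * cconst \<sigma> M
                        / (2 * (1 - \<eta>) * \<sigma> * Min (\<alpha> ` {..k})))
              \<le> (Fobj f psi (x 0) - Fstar f psi) *
                 ereal (1 / (\<gamma> * (k + 1)) * cconst \<sigma> M / (2 * \<sigma>)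
                        * max (1 / (1 - \<eta>)) (L / (2 * (1 - sqrt \<eta>) * (1 - \<gamma>) * \<sigma> * \<beta>)))))
    \<and> (\<forall>\<beta> \<gamma> x H0 nb D m0 M0.
       alg2_run 1 f gradf psi \<beta> \<gamma> \<eta> x H0 nb D \<and> psi (x 0) \<noteq> \<infinity> \<and>
       0 < m0 \<and> m0 \<le> M0 \<and> (\<forall>k. loewner_between m0 (H0 k) M0) \<longrightarrow>
       (\<forall>k. ereal (minGsq gradf psi x k)
              \<le> (Fobj f psi (x 0) - Fstar f psi) *
                 ereal (1 / (\<gamma> * (k + 1)) * cconst m0 (tildeM1 L \<beta> \<gamma> m0 M0 \<eta>)
                        / (2 * (1 - \<eta>) * m0))))
    \<and> (\<forall>\<beta> \<gamma> x H0 nb D m0 M0.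
       alg2_run 2 f gradf psi \<beta> \<gamma> \<eta> x H0 nb D \<and> psi (x 0) \<noteq> \<infinity> \<and>
       0 < m0 \<and> m0 \<le> M0 \<and> (\<forall>k. loewner_between m0 (H0 k) M0) \<longrightarrow>
       (\<forall>k. ereal (minGsq gradf psi x k)
              \<le> (Fobj f psi (x 0) - Fstar f psi) *
                 ereal (1 / (\<gamma> * (k + 1)) * cconst m0 (tildeM2 L \<beta> \<gamma> m0 M0 \<eta>)
                        / (2 * (1 - \<eta>) * m0))))"
proof -
  have tM1: "M0 \<le> tildeM1 L \<beta> \<gamma> m0 M0 \<eta>" if "0 < M0" for \<beta> \<gamma> m0 M0 :: real
    using that by (simp add: tildeM1_def)
  have tM2: "M0 \<le> tildeM2 L \<beta> \<gamma> m0 M0 \<eta>" for \<beta> \<gamma> m0 M0 :: real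
    by (simp add: tildeM2_def)
  show ?thesis
  apply (intro conjI allI impI)
  subgoal using alg1_main[OF A1] by blast
  subgoal using alg1_main[OF A1] by blast
  subgoal premises h for \<beta> \<gamma> x H0 nb D m0 M0 k
  proof -
    have run: "alg2_run 1 f gradf psi \<beta> \<gamma> \<eta> x H0 nb D" and px0: "psi (x 0) \<noteq> \<infinity>"
      and m: "0 < m0" "m0 \<le> M0" and lw: "\<forall>k. loewner_between m0 (H0 k) M0" using h by auto
    have up: "\<And>k p. psi (x k) = ereal p \<Longrightarrow> \<forall>w. w \<bullet> (trialH 1 \<beta> (H0 k) (nb k) *v w) \<le> tildeM1 L \<beta> \<gamma> m0 M0 \<eta> * (w \<bullet> w)"
      using var1_bound[OF A1 _ run _ m] lw by blast
    have "m0 \<le> tildeM1 L \<beta> \<gamma> m0 M0 \<eta>" using tM1[of M0 \<beta> \<gamma> m0] m by simp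
    from alg2_main[OF A1 run px0 up m(1) this] show ?thesis .
  qed
  subgoal premises h for \<beta> \<gamma> x H0 nb D m0 M0 k
  proof -
    have run: "alg2_run 2 f gradf psi \<beta> \<gamma> \<eta> x H0 nb D" and px0: "psi (x 0) \<noteq> \<infinity>"
      and m: "0 < m0" "m0 \<le> M0" and lw: "\<forall>k. loewner_between m0 (H0 k) M0" using h by auto
    have up: "\<And>k p. psi (x k) = ereal p \<Longrightarrow> \<forall>w. w \<bullet> (trialH 2 \<beta> (H0 k) (nb k) *v w) \<le> tildeM2 L \<beta> \<gamma> m0 M0 \<eta> * (w \<bullet> w)"
      using var2_bound[OF A1 _ run _ m] lw by blast
    have "m0 \<le> tildeM2 L \<beta> \<gamma> m0 M0 \<eta>" using m by (simp add: tildeM2_def)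
    from alg2_main[OF A1 run px0 up m(1) this] show ?thesis .
  qed
  done
qed

end
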